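(* Let $N,r\in\mathbb N$ and let $\mathsf A\in\mathbb H^{N\times N}$, $\mathsf B\in\mathbb H^{N\times r}$, $\mathsf C\in\mathbb H^{r\times N}$, $\mathsf D\in\mathbb H^{r\times r}$ be such that the matrix $\begin{pmatrix}\mathsf A&\mathsf B\\\mathsf C&\mathsf D\end{pmatrix}\in\mathbb H^{(N+r)\times(N+r)}$ is unitary. Let $B(x)=\mathsf D+\sum_{n\ge1}P_n(x)\mathsf C\mathsf A^{n-1}\mathsf B$, $x\in\mathcal E$. Then the operator $M_B\big(\sum_nP_nu_n\big)=\sum_n(P_n\odot B)u_n$ is an isometry from $(\mathbf H_2(\mathcal E))^r$ into itself, and the reproducing kernel Hilbert space $\mathcal H(B)$ with kernel $K_B(x,y)=\sum_{n\ge0}\big(P_n(x)\overline{P_n(y)}I_r-(P_n\odot B)(x)((P_n\odot B)(y))^*\big)$ is finite dimensional.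
   Context: For $m\ge0$, $T^m_j=\frac{2(m-j+1)}{(m+1)(m+2)}$, $c_m=\sum_{j=0}^m(-1)^jT^m_j$, $P_m(x)=\frac1{c_m}\sum_{j=0}^mT^m_jx^{m-j}\overline{x}^{\,j}$. $\mathcal E=\{x\in\mathbb H:9x_0^2+x_1^2+x_2^2+x_3^2<1\}$; $(\mathbf H_2(\mathcal E))^r$ is the Hilbert space of functions $\sum_mP_mf_m$, $f_m\in\mathbb H^r$, with $\|f\|^2=\sum_mf_m^*f_m$. $\odot$ is the Cauchy–Kovalevskaya product $f\odot g=CK(f|_{x_0=0}g|_{x_0=0})$, satisfying $P_n\odot\big(\sum_mP_mb_m\big)=\sum_mP_{n+m}b_m$ for matrix coefficients $b_m$. *)

theory Defs
  imports Complex_Main "Jordan_Normal_Form.Matrix"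
begin

datatype quat = Quat (qRe: real) (qI: real) (qJ: real) (qK: real)

instantiation quat :: ring_1
begin
definition "0 = Quat 0 0 0 0"
definition "1 = Quat 1 0 0 0"
definition "a + b = Quat (qRe a + qRe b) (qI a + qI b) (qJ a + qJ b) (qK a + qK b)"
definition "a - b = Quat (qRe a - qRe b) (qI a - qI b) (qJ a - qJ b) (qK a - qK b)"
definition "- a = Quat (- qRe a) (- qI a) (- qJ a) (- qK a)"
definition "a * b = Quat
   (qRe a * qRe b - qI a * qI b - qJ a * qJ b - qK a * qK b)
   (qRe a * qI b + qI a * qRe b + qJ a * qK b - qK a * qJ b)
   (qRe a * qJ b - qI a * qK b + qJ a * qRe b + qK a * qI b)
   (qRe a * qK b + qI a * qJ b - qJ a * qI b + qK a * qRe b)"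
instance
  by intro_classes
     (simp_all add: zero_quat_def one_quat_def plus_quat_def minus_quat_def
        uminus_quat_def times_quat_def quat.expand algebra_simps)
end

definition qreal :: "real \<Rightarrow> quat" where "qreal t = Quat t 0 0 0"
definition qcnj :: "quat \<Rightarrow> quat" where "qcnj q = Quat (qRe q) (- qI q) (- qJ q) (- qK q)"
definition qnorm2 :: "quat \<Rightarrow> real" where
  "qnorm2 q = (qRe q)\<^sup>2 + (qI q)\<^sup>2 + (qJ q)\<^sup>2 + (qK q)\<^sup>2"

definition qsuminf :: "(nat \<Rightarrow> quat) \<Rightarrow> quat" where
  "qsuminf f = Quat (\<Sum>n. qRe (f n)) (\<Sum>n. qI (f n)) (\<Sum>n. qJ (f n)) (\<Sum>n. qK (f n))"

definition mat_adj :: "quat mat \<Rightarrow> quat mat" where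
  "mat_adj U = mat (dim_col U) (dim_row U) (\<lambda>(i,j). qcnj (U $$ (j,i)))"

definition qunitary :: "quat mat \<Rightarrow> bool" where
  "qunitary U \<longleftrightarrow> dim_row U = dim_col U \<and>
     U * mat_adj U = 1\<^sub>m (dim_row U) \<and> mat_adj U * U = 1\<^sub>m (dim_row U)"

definition T :: "nat \<Rightarrow> nat \<Rightarrow> real" where
  "T m j = 2 * (real m - real j + 1) / ((real m + 1) * (real m + 2))"

definition cT :: "nat \<Rightarrow> real" where
  "cT m = (\<Sum>j\<le>m. (-1) ^ j * T m j)"

definition P :: "nat \<Rightarrow> quat \<Rightarrow> quat" where
  "P m x = qreal (1 / cT m) * (\<Sum>j\<le>m. qreal (T m j) * x ^ (m - j) * qcnj x ^ j)"

definition Ell :: "quat set" where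
  "Ell = {x. 9 * (qRe x)\<^sup>2 + (qI x)\<^sup>2 + (qJ x)\<^sup>2 + (qK x)\<^sup>2 < 1}"

text \<open>An element \<open>\<Sum>\<^sub>m P\<^sub>m f\<^sub>m\<close> is represented by its coefficient sequence \<open>f\<close>;
  \<open>\<parallel>f\<parallel>\<^sup>2 = \<Sum>\<^sub>m f\<^sub>m\<^sup>* f\<^sub>m\<close>.\<close>
definition vnorm2 :: "quat vec \<Rightarrow> real" where
  "vnorm2 v = (\<Sum>i<dim_vec v. qnorm2 (v $ i))"

definition H2 :: "nat \<Rightarrow> (nat \<Rightarrow> quat vec) set" where
  "H2 r = {f. (\<forall>m. f m \<in> carrier_vec r) \<and> summable (\<lambda>m. vnorm2 (f m))}"

definition H2norm2 :: "(nat \<Rightarrow> quat vec) \<Rightarrow> real" where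
  "H2norm2 f = (\<Sum>m. vnorm2 (f m))"

definition bcoef :: "quat mat \<Rightarrow> quat mat \<Rightarrow> quat mat \<Rightarrow> quat mat \<Rightarrow> nat \<Rightarrow> quat mat" where
  "bcoef A B C D m = (if m = 0 then D else C * (A ^\<^sub>m (m - 1)) * B)"

definition Bfun :: "quat mat \<Rightarrow> quat mat \<Rightarrow> quat mat \<Rightarrow> quat mat \<Rightarrow> nat \<Rightarrow> quat \<Rightarrow> quat mat" where
  "Bfun A B C D r x = mat r r (\<lambda>(i,j). qsuminf (\<lambda>m. P m x * bcoef A B C D m $$ (i,j)))"

text \<open>\<open>P\<^sub>n \<odot> B = \<Sum>\<^sub>m P\<^sub>n\<^sub>+\<^sub>m b\<^sub>m\<close> (the stated property of the CK product).\<close>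
definition PnB :: "quat mat \<Rightarrow> quat mat \<Rightarrow> quat mat \<Rightarrow> quat mat \<Rightarrow> nat \<Rightarrow> nat \<Rightarrow> quat \<Rightarrow> quat mat" where
  "PnB A B C D r n x = mat r r (\<lambda>(i,j). qsuminf (\<lambda>m. P (n + m) x * bcoef A B C D m $$ (i,j)))"

text \<open>\<open>M\<^sub>B(\<Sum>\<^sub>n P\<^sub>n u\<^sub>n) = \<Sum>\<^sub>n (P\<^sub>n \<odot> B) u\<^sub>n = \<Sum>\<^sub>n \<Sum>\<^sub>m P\<^sub>n\<^sub>+\<^sub>m b\<^sub>m u\<^sub>n\<close>;
  its \<open>k\<close>-th coefficient is \<open>\<Sum>\<^sub>j\<^sub>\<le>\<^sub>k b\<^sub>j u\<^sub>k\<^sub>-\<^sub>j\<close>.\<close>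
definition MB :: "quat mat \<Rightarrow> quat mat \<Rightarrow> quat mat \<Rightarrow> quat mat \<Rightarrow> nat \<Rightarrow> (nat \<Rightarrow> quat vec) \<Rightarrow> nat \<Rightarrow> quat vec" where
  "MB A B C D r u k = vec r (\<lambda>i. \<Sum>j\<le>k. (bcoef A B C D j *\<^sub>v u (k - j)) $ i)"

definition KB :: "quat mat \<Rightarrow> quat mat \<Rightarrow> quat mat \<Rightarrow> quat mat \<Rightarrow> nat \<Rightarrow> quat \<Rightarrow> quat \<Rightarrow> quat mat" where
  "KB A B C D r x y = mat r r (\<lambda>(i,j). qsuminf (\<lambda>n.
      (if i = j then P n x * qcnj (P n y) else 0)
      - (\<Sum>l<r. PnB A B C D r n x $$ (i,l) * qcnj (PnB A B C D r n y $$ (j,l)))))"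

text \<open>The reproducing kernel Hilbert space with kernel \<open>K\<close> on \<open>S\<close> (functions \<open>S \<rightarrow> \<bbbH>\<^sup>r\<close>,
  right \<open>\<bbbH>\<close>-module) is the closure of the span of the sections \<open>K(\<cdot>,y)c\<close>.  It is finite
  dimensional iff all these sections lie in the right span of finitely many functions.\<close>
definition rkhs_finite_dim :: "(quat \<Rightarrow> quat \<Rightarrow> quat mat) \<Rightarrow> quat set \<Rightarrow> nat \<Rightarrow> bool" where
  "rkhs_finite_dim K S r \<longleftrightarrow>
     (\<exists>F :: (quat \<Rightarrow> quat vec) set. finite F \<and>
        (\<forall>y\<in>S. \<forall>c\<in>carrier_vec r. \<exists>coef :: (quat \<Rightarrow> quat vec) \<Rightarrow> quat.
           \<forall>x\<in>S. K x y *\<^sub>v c = vec r (\<lambda>i. \<Sum>f\<in>F. (f x $ i) * coef f)))"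

end

theory Submission
  imports Defs
begin

lemma quat_eq_iff: "a = b \<longleftrightarrow> qRe a = qRe b \<and> qI a = qI b \<and> qJ a = qJ b \<and> qK a = qK b"
  by (cases a; cases b) auto

lemma quat_sel_simps[simp]:
  "qRe 0 = 0" "qI 0 = 0" "qJ 0 = 0" "qK 0 = 0"
  "qRe 1 = 1" "qI 1 = 0" "qJ 1 = 0" "qK 1 = 0"
  "qRe (a + b) = qRe a + qRe b" "qI (a + b) = qI a + qI b" "qJ (a + b) = qJ a + qJ b" "qK (a + b) = qK a + qK b"
  "qRe (a - b) = qRe a - qRe b" "qI (a - b) = qI a - qI b" "qJ (a - b) = qJ a - qJ b" "qK (a - b) = qK a - qK b"
  "qRe (- a) = - qRe a" "qI (- a) = - qI a" "qJ (- a) = - qJ a" "qK (- a) = - qK a"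
  by (simp_all add: zero_quat_def one_quat_def plus_quat_def minus_quat_def uminus_quat_def)

lemma quat_mult_sel[simp]:
  "qRe (a * b) = qRe a * qRe b - qI a * qI b - qJ a * qJ b - qK a * qK b"
  "qI (a * b) = qRe a * qI b + qI a * qRe b + qJ a * qK b - qK a * qJ b"
  "qJ (a * b) = qRe a * qJ b - qI a * qK b + qJ a * qRe b + qK a * qI b"
  "qK (a * b) = qRe a * qK b + qI a * qJ b - qJ a * qI b + qK a * qRe b"
  by (simp_all add: times_quat_def)

lemma cs4: "(a0*b0+a1*b1+a2*b2+a3*b3)^2 \<le> (a0^2+a1^2+a2^2+a3^2)*(b0^2+b1^2+b2^2+b3^2::real)"
proof -
  have "(a0^2+a1^2+a2^2+a3^2)*(b0^2+b1^2+b2^2+b3^2) - (a0*b0+a1*b1+a2*b2+a3*b3)^2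
    = (a0*b1-a1*b0)^2 + (a0*b2-a2*b0)^2 + (a0*b3-a3*b0)^2 + (a1*b2-a2*b1)^2 + (a1*b3-a3*b1)^2 + (a2*b3-a3*b2)^2"
    by (simp add: power2_eq_square field_simps)
  moreover have "0 \<le> (a0*b1-a1*b0)^2 + (a0*b2-a2*b0)^2 + (a0*b3-a3*b0)^2 + (a1*b2-a2*b1)^2 + (a1*b3-a3*b1)^2 + (a2*b3-a3*b2)^2"
    by simp
  ultimately show ?thesis by linarith
qed

lemma tri4: "sqrt ((a0+b0)^2+(a1+b1)^2+(a2+b2)^2+(a3+b3)^2) \<le> sqrt (a0^2+a1^2+a2^2+a3^2) + sqrt (b0^2+b1^2+b2^2+b3^2::real)"
proof -
  define A where "A = a0^2+a1^2+a2^2+a3^2"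
  define B where "B = b0^2+b1^2+b2^2+b3^2"
  have A0: "A \<ge> 0" "B \<ge> 0" unfolding A_def B_def by auto
  have "a0*b0+a1*b1+a2*b2+a3*b3 \<le> sqrt (A*B)"
    using cs4[of a0 b0 a1 b1 a2 b2 a3 b3] unfolding A_def B_def using real_le_rsqrt by (metis abs_le_D1 real_sqrt_abs)
  moreover have "(a0+b0)^2+(a1+b1)^2+(a2+b2)^2+(a3+b3)^2 = A + B + 2*(a0*b0+a1*b1+a2*b2+a3*b3)"
    unfolding A_def B_def by (simp add: power2_sum)
  moreover have "(sqrt A + sqrt B)^2 = A + B + 2 * sqrt (A*B)"
    using A0 by (simp add: power2_sum real_sqrt_mult)
  ultimately have "(a0+b0)^2+(a1+b1)^2+(a2+b2)^2+(a3+b3)^2 \<le> (sqrt A + sqrt B)^2"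
    by (metis add_left_mono mult_left_mono zero_le_numeral)
  thus ?thesis unfolding A_def[symmetric] B_def[symmetric]
    using A0 by (metis add_nonneg_nonneg real_sqrt_ge_zero real_sqrt_le_mono real_sqrt_unique)
qed

instantiation quat :: real_algebra_1
begin
definition "scaleR t q = Quat (t * qRe q) (t * qI q) (t * qJ q) (t * qK q)"
instance
proof
  fix a b :: real and x y :: quat
  show "a *\<^sub>R (x + y) = a *\<^sub>R x + a *\<^sub>R y" by (simp add: scaleR_quat_def quat_eq_iff algebra_simps)
  show "(a + b) *\<^sub>R x = a *\<^sub>R x + b *\<^sub>R x" by (simp add: scaleR_quat_def quat_eq_iff algebra_simps)
  show "a *\<^sub>R b *\<^sub>R x = (a * b) *\<^sub>R x" by (simp add: scaleR_quat_def quat_eq_iff algebra_simps)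
  show "1 *\<^sub>R x = x" by (simp add: scaleR_quat_def quat_eq_iff algebra_simps)
  show "a *\<^sub>R x * y = a *\<^sub>R (x * y)" by (simp add: scaleR_quat_def quat_eq_iff algebra_simps)
  show "x * a *\<^sub>R y = a *\<^sub>R (x * y)" by (simp add: scaleR_quat_def quat_eq_iff algebra_simps)
qed
end

instantiation quat :: real_normed_algebra_1
begin
definition "norm q = sqrt ((qRe q)\<^sup>2 + (qI q)\<^sup>2 + (qJ q)\<^sup>2 + (qK q)\<^sup>2)"
definition quat_sgn_def: "sgn (x::quat) = x /\<^sub>R norm x"
definition dist_quat_def: "dist (x::quat) y = norm (x - y)"
definition uniformity_quat_def:
  "(uniformity :: (quat \<times> quat) filter) = (INF e\<in>{0 <..}. principal {(x, y). dist x y < e})"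
definition open_quat_def:
  "open (U :: quat set) \<longleftrightarrow> (\<forall>x\<in>U. eventually (\<lambda>(x', y). x' = x \<longrightarrow> y \<in> U) uniformity)"
instance
proof
  fix a b :: real and x y :: quat
  show "(norm x = 0) = (x = 0)" by (simp add: norm_quat_def quat_eq_iff add_nonneg_eq_0_iff)
  show "norm (x + y) \<le> norm x + norm y" unfolding norm_quat_def using tri4 by simp
  show "norm (a *\<^sub>R x) = \<bar>a\<bar> * norm x"
    by (simp add: norm_quat_def scaleR_quat_def power_mult_distrib distrib_left [symmetric] real_sqrt_mult)
  show "norm (x * y) \<le> norm x * norm y"
  proof -
    have "(qRe (x*y))\<^sup>2 + (qI (x*y))\<^sup>2 + (qJ (x*y))\<^sup>2 + (qK (x*y))\<^sup>2
      = ((qRe x)\<^sup>2 + (qI x)\<^sup>2 + (qJ x)\<^sup>2 + (qK x)\<^sup>2) * ((qRe y)\<^sup>2 + (qI y)\<^sup>2 + (qJ y)\<^sup>2 + (qK y)\<^sup>2)"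
      by (simp only: quat_mult_sel) (simp add: power2_eq_square field_simps)
    thus ?thesis by (simp add: norm_quat_def real_sqrt_mult)
  qed
  show "norm (1::quat) = 1" by (simp add: norm_quat_def)
qed (rule quat_sgn_def dist_quat_def open_quat_def uniformity_quat_def)+
end

lemma norm_quat_mult: "norm (x * y :: quat) = norm x * norm y"
proof -
  have "(qRe (x*y))\<^sup>2 + (qI (x*y))\<^sup>2 + (qJ (x*y))\<^sup>2 + (qK (x*y))\<^sup>2
    = ((qRe x)\<^sup>2 + (qI x)\<^sup>2 + (qJ x)\<^sup>2 + (qK x)\<^sup>2) * ((qRe y)\<^sup>2 + (qI y)\<^sup>2 + (qJ y)\<^sup>2 + (qK y)\<^sup>2)"
    by (simp only: quat_mult_sel) (simp add: power2_eq_square field_simps)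
  thus ?thesis by (simp add: norm_quat_def real_sqrt_mult)
qed

lemma comp_le_norm: "\<bar>qRe q\<bar> \<le> norm q" "\<bar>qI q\<bar> \<le> norm q" "\<bar>qJ q\<bar> \<le> norm q" "\<bar>qK q\<bar> \<le> norm q"
proof -
  have "sqrt ((qRe q)\<^sup>2) \<le> norm q" "sqrt ((qI q)\<^sup>2) \<le> norm q" "sqrt ((qJ q)\<^sup>2) \<le> norm q" "sqrt ((qK q)\<^sup>2) \<le> norm q"
    unfolding norm_quat_def by (rule real_sqrt_le_mono; simp)+
  thus "\<bar>qRe q\<bar> \<le> norm q" "\<bar>qI q\<bar> \<le> norm q" "\<bar>qJ q\<bar> \<le> norm q" "\<bar>qK q\<bar> \<le> norm q"
    by simp_all
qed

lemma norm_le_comps: "norm q \<le> \<bar>qRe q\<bar> + \<bar>qI q\<bar> + \<bar>qJ q\<bar> + \<bar>qK q\<bar>"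
proof -
  have e: "q = Quat (qRe q) 0 0 0 + Quat 0 (qI q) 0 0 + Quat 0 0 (qJ q) 0 + Quat 0 0 0 (qK q)"
    by (simp add: quat_eq_iff)
  have "norm q \<le> norm (Quat (qRe q) 0 0 0 + Quat 0 (qI q) 0 0 + Quat 0 0 (qJ q) 0) + norm (Quat 0 0 0 (qK q))"
    by (subst e, rule norm_triangle_ineq)
  also have "\<dots> \<le> norm (Quat (qRe q) 0 0 0 + Quat 0 (qI q) 0 0) + norm (Quat 0 0 (qJ q) 0) + norm (Quat 0 0 0 (qK q))"
    using norm_triangle_ineq by (rule add_right_mono)
  also have "\<dots> \<le> norm (Quat (qRe q) 0 0 0) + norm (Quat 0 (qI q) 0 0) + norm (Quat 0 0 (qJ q) 0) + norm (Quat 0 0 0 (qK q))"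
    using norm_triangle_ineq by (intro add_right_mono)
  finally show ?thesis by (simp add: norm_quat_def)
qed

lemma bl_comps: "bounded_linear qRe" "bounded_linear qI" "bounded_linear qJ" "bounded_linear qK"
  by (auto intro!: bounded_linear_intro[where K=1] simp: scaleR_quat_def comp_le_norm)

instance quat :: banach
proof
  fix X :: "nat \<Rightarrow> quat"
  assume X: "Cauchy X"
  have c: "Cauchy (\<lambda>n. f (X n))" if "bounded_linear f" for f :: "quat \<Rightarrow> real"
    using bounded_linear.Cauchy[OF that X] .
  obtain a b c' d where la: "(\<lambda>n. qRe (X n)) \<longlonglongrightarrow> a" and lb: "(\<lambda>n. qI (X n)) \<longlonglongrightarrow> b"
    and lc: "(\<lambda>n. qJ (X n)) \<longlonglongrightarrow> c'" and ld: "(\<lambda>n. qK (X n)) \<longlonglongrightarrow> d"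
    using c[OF bl_comps(1)] c[OF bl_comps(2)] c[OF bl_comps(3)] c[OF bl_comps(4)]
    by (meson Cauchy_convergent_iff convergent_def)
  have "(\<lambda>n. \<bar>qRe (X n) - a\<bar> + \<bar>qI (X n) - b\<bar> + \<bar>qJ (X n) - c'\<bar> + \<bar>qK (X n) - d\<bar>) \<longlonglongrightarrow> \<bar>a - a\<bar> + \<bar>b - b\<bar> + \<bar>c' - c'\<bar> + \<bar>d - d\<bar>"
    by (intro tendsto_intros la lb lc ld)
  hence g0: "(\<lambda>n. \<bar>qRe (X n) - a\<bar> + \<bar>qI (X n) - b\<bar> + \<bar>qJ (X n) - c'\<bar> + \<bar>qK (X n) - d\<bar>) \<longlonglongrightarrow> 0" by simp
  have "(\<lambda>n. X n - Quat a b c' d) \<longlonglongrightarrow> 0"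
  proof (rule tendsto_0_le[OF g0, where K=1], rule always_eventually, rule allI)
    fix n
    show "norm (X n - Quat a b c' d) \<le> norm (\<bar>qRe (X n) - a\<bar> + \<bar>qI (X n) - b\<bar> + \<bar>qJ (X n) - c'\<bar> + \<bar>qK (X n) - d\<bar>) * 1"
      using norm_le_comps[of "X n - Quat a b c' d"] by simp
  qed
  hence "X \<longlonglongrightarrow> Quat a b c' d" by (rule LIM_zero_cancel)
  thus "convergent X" by (rule convergentI)
qed

lemma qsuminf_eq: assumes "summable f" shows "qsuminf f = suminf f"
proof -
  have 1: "qRe (suminf f) = (\<Sum>n. qRe (f n))" by (rule bounded_linear.suminf[OF bl_comps(1) assms])
  have 2: "qI (suminf f) = (\<Sum>n. qI (f n))" by (rule bounded_linear.suminf[OF bl_comps(2) assms])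
  have 3: "qJ (suminf f) = (\<Sum>n. qJ (f n))" by (rule bounded_linear.suminf[OF bl_comps(3) assms])
  have 4: "qK (suminf f) = (\<Sum>n. qK (f n))" by (rule bounded_linear.suminf[OF bl_comps(4) assms])
  show ?thesis unfolding qsuminf_def 1[symmetric] 2[symmetric] 3[symmetric] 4[symmetric] by simp
qed

lemma qcnj_simps[simp]:
  "qcnj 0 = 0" "qcnj 1 = 1" "qcnj (a + b) = qcnj a + qcnj b" "qcnj (a - b) = qcnj a - qcnj b"
  "qcnj (- a) = - qcnj a" "qcnj (qcnj a) = a" "qcnj (a * b) = qcnj b * qcnj a"
  by (simp_all add: qcnj_def quat_eq_iff algebra_simps)

lemma qcnj_sel[simp]: "qRe (qcnj q) = qRe q" "qI (qcnj q) = - qI q" "qJ (qcnj q) = - qJ q" "qK (qcnj q) = - qK q"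
  by (simp_all add: qcnj_def)

lemma qcnj_sum: "qcnj (sum f A) = (\<Sum>x\<in>A. qcnj (f x))"
  by (induct A rule: infinite_finite_induct) auto

lemma norm_qcnj[simp]: "norm (qcnj q) = norm q"
  by (simp add: norm_quat_def)

lemma qnorm2_norm: "qnorm2 q = (norm q)\<^sup>2"
  by (simp add: qnorm2_def norm_quat_def)

lemma qnorm2_nonneg: "qnorm2 q \<ge> 0" by (simp add: qnorm2_def)

lemma qRe_cnj_mult: "qRe (qcnj q * q) = qnorm2 q" "qRe (q * qcnj q) = qnorm2 q"
  by (simp_all add: qnorm2_def power2_eq_square)

lemma norm_qreal[simp]: "norm (qreal t) = \<bar>t\<bar>"
  by (simp add: qreal_def norm_quat_def)

lemma norm_qpower: "norm ((x::quat) ^ n) = norm x ^ n"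
  by (induct n) (simp_all add: norm_quat_mult)

lemma scaleR_sel[simp]: "qRe (t *\<^sub>R q) = t * qRe q" "qI (t *\<^sub>R q) = t * qI q" "qJ (t *\<^sub>R q) = t * qJ q" "qK (t *\<^sub>R q) = t * qK q"
  by (simp_all add: scaleR_quat_def)

lemma bl_qcnj: "bounded_linear qcnj"
  by (rule bounded_linear_intro[where K=1]) (auto simp: quat_eq_iff)

lemma mult_entry:
  assumes "A \<in> carrier_mat n k" "B \<in> carrier_mat k m" "i < n" "j < m"
  shows "(A * B) $$ (i,j) = (\<Sum>l<k. A $$ (i,l) * B $$ (l,j))"
  using assms by (auto simp: scalar_prod_def atLeast0LessThan intro!: sum.cong)

lemma mult_vec_entry:
  assumes "A \<in> carrier_mat n k" "v \<in> carrier_vec k" "i < n"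
  shows "(A *\<^sub>v v) $ i = (\<Sum>l<k. A $$ (i,l) * v $ l)"
  using assms by (auto simp: scalar_prod_def atLeast0LessThan intro!: sum.cong)

lemma sp_row_col:
  assumes "A \<in> carrier_mat n k" "B \<in> carrier_mat k m" "i < n" "j < m"
  shows "row A i \<bullet> col B j = (\<Sum>l<k. A $$ (i,l) * B $$ (l,j))"
  using assms by (auto simp: scalar_prod_def atLeast0LessThan intro!: sum.cong)

lemma sp_row_vec:
  assumes "A \<in> carrier_mat n k" "v \<in> carrier_vec k" "i < n"
  shows "row A i \<bullet> v = (\<Sum>l<k. A $$ (i,l) * v $ l)"
  using assms by (auto simp: scalar_prod_def atLeast0LessThan intro!: sum.cong)

lemma adj_carrier[simp]: "A \<in> carrier_mat n m \<Longrightarrow> mat_adj A \<in> carrier_mat m n"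
  by (auto simp: mat_adj_def)

lemma adj_dims[simp]: "dim_row (mat_adj A) = dim_col A" "dim_col (mat_adj A) = dim_row A"
  by (auto simp: mat_adj_def)

lemma adj_index[simp]: "i < dim_col A \<Longrightarrow> j < dim_row A \<Longrightarrow> mat_adj A $$ (i,j) = qcnj (A $$ (j,i))"
  by (auto simp: mat_adj_def)

lemma adj_mult:
  assumes "A \<in> carrier_mat n k" "B \<in> carrier_mat k m"
  shows "mat_adj (A * B) = mat_adj B * mat_adj A"
proof (rule eq_matI)
  fix i j assume "i < dim_row (mat_adj B * mat_adj A)" "j < dim_col (mat_adj B * mat_adj A)"
  hence ij: "i < m" "j < n" using assms by auto
  have "mat_adj (A * B) $$ (i,j) = qcnj ((A*B) $$ (j,i))" using assms ij by simp
  also have "\<dots> = (\<Sum>l<k. qcnj (B $$ (l,i)) * qcnj (A $$ (j,l)))"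
    unfolding mult_entry[OF assms ij(2) ij(1)] qcnj_sum by simp
  also have "\<dots> = (mat_adj B * mat_adj A) $$ (i,j)"
    using assms ij by (subst mult_entry[of _ m k _ n]) auto
  finally show "mat_adj (A * B) $$ (i, j) = (mat_adj B * mat_adj A) $$ (i, j)" .
qed (use assms in auto)

lemma adj_add:
  assumes "A \<in> carrier_mat n m" "B \<in> carrier_mat n m"
  shows "mat_adj (A + B) = mat_adj A + mat_adj B"
  using assms by (intro eq_matI) auto

lemma adj_one[simp]: "mat_adj (1\<^sub>m n) = 1\<^sub>m n"
  by (intro eq_matI) auto

lemma adj_four_block:
  assumes "A \<in> carrier_mat n1 m1" "B \<in> carrier_mat n1 m2" "C \<in> carrier_mat n2 m1" "D \<in> carrier_mat n2 m2"
  shows "mat_adj (four_block_mat A B C D) = four_block_mat (mat_adj A) (mat_adj C) (mat_adj B) (mat_adj D)"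
  using assms by (intro eq_matI) auto

lemma four_block_eqD:
  assumes "four_block_mat A B C D = four_block_mat A' B' C' D'"
    "A \<in> carrier_mat n1 m1" "B \<in> carrier_mat n1 m2" "C \<in> carrier_mat n2 m1" "D \<in> carrier_mat n2 m2"
    "A' \<in> carrier_mat n1 m1" "B' \<in> carrier_mat n1 m2" "C' \<in> carrier_mat n2 m1" "D' \<in> carrier_mat n2 m2"
  shows "A = A'" "B = B'" "C = C'" "D = D'"
proof -
  let ?M = "four_block_mat A B C D" and ?M' = "four_block_mat A' B' C' D'"
  have e: "?M $$ (i,j) = ?M' $$ (i,j)" for i j using assms(1) by simp
  show "A = A'"
  proof (rule eq_matI)
    fix i j assume ij: "i < dim_row A'" "j < dim_col A'"
    have "?M $$ (i,j) = A $$ (i,j)" "?M' $$ (i,j) = A' $$ (i,j)" using ij assms(2-9) by auto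
    thus "A $$ (i,j) = A' $$ (i,j)" using e[of i j] by simp
  qed (use assms in auto)
  show "B = B'"
  proof (rule eq_matI)
    fix i j assume ij: "i < dim_row B'" "j < dim_col B'"
    have "?M $$ (i,j+m1) = B $$ (i,j)" "?M' $$ (i,j+m1) = B' $$ (i,j)" using ij assms(2-9) by auto
    thus "B $$ (i,j) = B' $$ (i,j)" using e[of i "j+m1"] by simp
  qed (use assms in auto)
  show "C = C'"
  proof (rule eq_matI)
    fix i j assume ij: "i < dim_row C'" "j < dim_col C'"
    have "?M $$ (i+n1,j) = C $$ (i,j)" "?M' $$ (i+n1,j) = C' $$ (i,j)" using ij assms(2-9) by auto
    thus "C $$ (i,j) = C' $$ (i,j)" using e[of "i+n1" j] by simp
  qed (use assms in auto)
  show "D = D'"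
  proof (rule eq_matI)
    fix i j assume ij: "i < dim_row D'" "j < dim_col D'"
    have "?M $$ (i+n1,j+m1) = D $$ (i,j)" "?M' $$ (i+n1,j+m1) = D' $$ (i,j)" using ij assms(2-9) by auto
    thus "D $$ (i,j) = D' $$ (i,j)" using e[of "i+n1" "j+m1"] by simp
  qed (use assms in auto)
qed

lemma unitary_blocks:
  assumes A: "A \<in> carrier_mat N N" and B: "B \<in> carrier_mat N r"
    and C: "C \<in> carrier_mat r N" and D: "D \<in> carrier_mat r r"
    and U: "qunitary (four_block_mat A B C D)"
  shows "A * mat_adj A + B * mat_adj B = 1\<^sub>m N"
    "A * mat_adj C + B * mat_adj D = 0\<^sub>m N r"
    "C * mat_adj A + D * mat_adj B = 0\<^sub>m r N"
    "C * mat_adj C + D * mat_adj D = 1\<^sub>m r"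
    "mat_adj A * A + mat_adj C * C = 1\<^sub>m N"
    "mat_adj A * B + mat_adj C * D = 0\<^sub>m N r"
    "mat_adj B * A + mat_adj D * C = 0\<^sub>m r N"
    "mat_adj B * B + mat_adj D * D = 1\<^sub>m r"
proof -
  have d: "dim_row (four_block_mat A B C D) = N + r" using A D by simp
  have u1: "four_block_mat A B C D * mat_adj (four_block_mat A B C D) = 1\<^sub>m (N + r)"
    and u2: "mat_adj (four_block_mat A B C D) * four_block_mat A B C D = 1\<^sub>m (N + r)"
    using U d unfolding qunitary_def by auto
  have e1: "four_block_mat (A * mat_adj A + B * mat_adj B) (A * mat_adj C + B * mat_adj D)
     (C * mat_adj A + D * mat_adj B) (C * mat_adj C + D * mat_adj D)
     = four_block_mat (1\<^sub>m N) (0\<^sub>m N r) (0\<^sub>m r N) (1\<^sub>m r)"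
    using u1 mult_four_block_mat[OF A B C D adj_carrier[OF A] adj_carrier[OF C] adj_carrier[OF B] adj_carrier[OF D]]
    unfolding adj_four_block[OF A B C D] four_block_one_mat by simp
  have e2: "four_block_mat (mat_adj A * A + mat_adj C * C) (mat_adj A * B + mat_adj C * D)
     (mat_adj B * A + mat_adj D * C) (mat_adj B * B + mat_adj D * D)
     = four_block_mat (1\<^sub>m N) (0\<^sub>m N r) (0\<^sub>m r N) (1\<^sub>m r)"
    using u2 mult_four_block_mat[OF adj_carrier[OF A] adj_carrier[OF C] adj_carrier[OF B] adj_carrier[OF D] A B C D]
    unfolding adj_four_block[OF A B C D] four_block_one_mat by simp
  note c = A B C D adj_carrier[OF A] adj_carrier[OF B] adj_carrier[OF C] adj_carrier[OF D]
  show "A * mat_adj A + B * mat_adj B = 1\<^sub>m N"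
    "A * mat_adj C + B * mat_adj D = 0\<^sub>m N r"
    "C * mat_adj A + D * mat_adj B = 0\<^sub>m r N"
    "C * mat_adj C + D * mat_adj D = 1\<^sub>m r"
    using four_block_eqD[OF e1, where ?n1.0=N and ?m1.0=N and ?n2.0=r and ?m2.0=r] c by auto
  show "mat_adj A * A + mat_adj C * C = 1\<^sub>m N"
    "mat_adj A * B + mat_adj C * D = 0\<^sub>m N r"
    "mat_adj B * A + mat_adj D * C = 0\<^sub>m r N"
    "mat_adj B * B + mat_adj D * D = 1\<^sub>m r"
    using four_block_eqD[OF e2, where ?n1.0=N and ?m1.0=N and ?n2.0=r and ?m2.0=r] c by auto
qed

definition ip :: "quat vec \<Rightarrow> quat vec \<Rightarrow> quat" where
  "ip v w = (\<Sum>i<dim_vec v. qcnj (v $ i) * w $ i)"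

lemma ip_add_left: "dim_vec v1 = dim_vec v2 \<Longrightarrow> dim_vec w = dim_vec v2 \<Longrightarrow>
  ip (v1 + v2) w = ip v1 w + ip v2 w"
  by (simp add: ip_def sum.distrib distrib_right)

lemma ip_add_right: "dim_vec w1 = dim_vec v \<Longrightarrow> dim_vec w2 = dim_vec v \<Longrightarrow>
  ip v (w1 + w2) = ip v w1 + ip v w2"
  by (simp add: ip_def sum.distrib distrib_left)

lemma ip_mult:
  assumes M: "M \<in> carrier_mat n m" and v: "v \<in> carrier_vec m" and w: "w \<in> carrier_vec n"
  shows "ip (M *\<^sub>v v) w = ip v (mat_adj M *\<^sub>v w)"
proof -
  have "ip (M *\<^sub>v v) w = (\<Sum>i<n. qcnj (\<Sum>l<m. M $$ (i,l) * v $ l) * w $ i)"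
    unfolding ip_def using M v by (auto simp: sp_row_vec[OF M v] intro!: sum.cong)
  also have "\<dots> = (\<Sum>i<n. \<Sum>l<m. qcnj (v $ l) * (qcnj (M $$ (i,l)) * w $ i))"
    by (simp add: qcnj_sum sum_distrib_right mult.assoc)
  also have "\<dots> = (\<Sum>l<m. \<Sum>i<n. qcnj (v $ l) * (qcnj (M $$ (i,l)) * w $ i))"
    by (rule sum.swap)
  also have "\<dots> = ip v (mat_adj M *\<^sub>v w)"
    unfolding ip_def using M v w
    by (auto simp: sp_row_vec[OF adj_carrier[OF M] w] sum_distrib_left intro!: sum.cong)
  finally show ?thesis .
qed

lemma zero_mult_vec: "w \<in> carrier_vec m \<Longrightarrow> 0\<^sub>m n m *\<^sub>v w = 0\<^sub>v n"
  by (intro eq_vecI) (auto simp: scalar_prod_def)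

lemma ip_zero: "w \<in> carrier_vec m \<Longrightarrow> v \<in> carrier_vec n \<Longrightarrow> ip v (0\<^sub>m n m *\<^sub>v w) = 0"
  unfolding ip_def zero_mult_vec by (intro sum.neutral) auto

lemma qRe_sum: "qRe (sum f A) = (\<Sum>x\<in>A. qRe (f x))"
  by (induct A rule: infinite_finite_induct) auto

lemma ip_sum2:
  assumes X1: "X1 \<in> carrier_mat n m" and X2: "X2 \<in> carrier_mat n m" and w: "w \<in> carrier_vec m" and v: "v \<in> carrier_vec n"
  shows "ip v (X1 *\<^sub>v w) + ip v (X2 *\<^sub>v w) = ip v ((X1 + X2) *\<^sub>v w)"
  using X1 X2 v w by (simp add: add_mult_distrib_mat_vec[OF X1 X2 w] ip_add_right)

lemma vnorm2_ip: "vnorm2 v = qRe (ip v v)"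
proof -
  have "qRe (ip v v) = (\<Sum>i<dim_vec v. qRe (qcnj (v $ i) * v $ i))"
    unfolding ip_def by (rule qRe_sum)
  thus ?thesis unfolding vnorm2_def by (simp add: qnorm2_def power2_eq_square)
qed

lemma energy:
  assumes A: "A \<in> carrier_mat N N" and B: "B \<in> carrier_mat N r"
    and C: "C \<in> carrier_mat r N" and D: "D \<in> carrier_mat r r"
    and U: "qunitary (four_block_mat A B C D)"
    and x: "x \<in> carrier_vec N" and u: "u \<in> carrier_vec r"
  shows "vnorm2 (A *\<^sub>v x + B *\<^sub>v u) + vnorm2 (C *\<^sub>v x + D *\<^sub>v u) = vnorm2 x + vnorm2 u"
proof -
  note ub = unitary_blocks[OF A B C D U]
  let ?p = "A *\<^sub>v x + B *\<^sub>v u" and ?q = "C *\<^sub>v x + D *\<^sub>v u"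
  have p: "?p \<in> carrier_vec N" and q: "?q \<in> carrier_vec r" using A B C D x u by auto
  note aA = adj_carrier[OF A] and aB = adj_carrier[OF B] and aC = adj_carrier[OF C] and aD = adj_carrier[OF D]
  have "ip ?p ?p = ip x (mat_adj A *\<^sub>v ?p) + ip u (mat_adj B *\<^sub>v ?p)"
    using A B x u p by (simp add: ip_add_left ip_mult[of _ N])
  also have "\<dots> = ip x ((mat_adj A * A) *\<^sub>v x) + ip x ((mat_adj A * B) *\<^sub>v u)
      + ip u ((mat_adj B * A) *\<^sub>v x) + ip u ((mat_adj B * B) *\<^sub>v u)"
    using A B x u aA aB
    by (simp add: mult_add_distrib_mat_vec[of _ N N] mult_add_distrib_mat_vec[of _ r N] ip_add_right ip_add_right
      assoc_mult_mat_vec[OF aA A x] assoc_mult_mat_vec[OF aA B u] assoc_mult_mat_vec[OF aB A x] assoc_mult_mat_vec[OF aB B u])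
  finally have 1: "ip ?p ?p = ip x ((mat_adj A * A) *\<^sub>v x) + ip x ((mat_adj A * B) *\<^sub>v u)
      + ip u ((mat_adj B * A) *\<^sub>v x) + ip u ((mat_adj B * B) *\<^sub>v u)" .
  have "ip ?q ?q = ip x (mat_adj C *\<^sub>v ?q) + ip u (mat_adj D *\<^sub>v ?q)"
    using C D x u q by (simp add: ip_add_left ip_mult[of _ r])
  also have "\<dots> = ip x ((mat_adj C * C) *\<^sub>v x) + ip x ((mat_adj C * D) *\<^sub>v u)
      + ip u ((mat_adj D * C) *\<^sub>v x) + ip u ((mat_adj D * D) *\<^sub>v u)"
    using C D x u aC aD
    by (simp add: mult_add_distrib_mat_vec[of _ N r] mult_add_distrib_mat_vec[of _ r r] ip_add_right ip_add_right
      assoc_mult_mat_vec[OF aC C x] assoc_mult_mat_vec[OF aC D u] assoc_mult_mat_vec[OF aD C x] assoc_mult_mat_vec[OF aD D u])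
  finally have 2: "ip ?q ?q = ip x ((mat_adj C * C) *\<^sub>v x) + ip x ((mat_adj C * D) *\<^sub>v u)
      + ip u ((mat_adj D * C) *\<^sub>v x) + ip u ((mat_adj D * D) *\<^sub>v u)" .
  have 3: "ip x ((mat_adj A * A) *\<^sub>v x) + ip x ((mat_adj C * C) *\<^sub>v x) = ip x x"
    unfolding ip_sum2[OF mult_carrier_mat[OF aA A] mult_carrier_mat[OF aC C] x x] ub(5) using x by simp
  have 4: "ip x ((mat_adj A * B) *\<^sub>v u) + ip x ((mat_adj C * D) *\<^sub>v u) = 0"
    unfolding ip_sum2[OF mult_carrier_mat[OF aA B] mult_carrier_mat[OF aC D] u x] ub(6) using x u by (simp add: ip_zero)
  have 5: "ip u ((mat_adj B * A) *\<^sub>v x) + ip u ((mat_adj D * C) *\<^sub>v x) = 0"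
    unfolding ip_sum2[OF mult_carrier_mat[OF aB A] mult_carrier_mat[OF aD C] x u] ub(7) using x u by (simp add: ip_zero)
  have 6: "ip u ((mat_adj B * B) *\<^sub>v u) + ip u ((mat_adj D * D) *\<^sub>v u) = ip u u"
    unfolding ip_sum2[OF mult_carrier_mat[OF aB B] mult_carrier_mat[OF aD D] u u] ub(8) using u by simp
  have "ip ?p ?p + ip ?q ?q = ip x x + ip u u"
    unfolding 1 2 using 3 4 5 6 by (simp add: algebra_simps)
  thus ?thesis unfolding vnorm2_ip by (metis quat_sel_simps(9))
qed

definition fro :: "quat mat \<Rightarrow> real" where
  "fro X = (\<Sum>i<dim_row X. \<Sum>j<dim_col X. qnorm2 (X $$ (i,j)))"

lemma fro_nonneg: "fro X \<ge> 0"
  unfolding fro_def by (intro sum_nonneg) (simp add: qnorm2_nonneg)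

lemma entry_le_fro: "i < dim_row X \<Longrightarrow> j < dim_col X \<Longrightarrow> qnorm2 (X $$ (i,j)) \<le> fro X"
proof -
  assume ij: "i < dim_row X" "j < dim_col X"
  have "qnorm2 (X $$ (i,j)) \<le> (\<Sum>j<dim_col X. qnorm2 (X $$ (i,j)))"
    using ij by (intro member_le_sum) (auto simp: qnorm2_nonneg)
  also have "\<dots> \<le> fro X" unfolding fro_def
    using ij by (intro member_le_sum[where f="\<lambda>i. \<Sum>j<dim_col X. qnorm2 (X $$ (i,j))"]) (auto intro!: sum_nonneg simp: qnorm2_nonneg)
  finally show ?thesis .
qed

lemma fro_adj: "fro X = (\<Sum>i<dim_row X. qRe ((X * mat_adj X) $$ (i,i)))"
  unfolding fro_def
proof (intro sum.cong refl)
  fix i assume "i \<in> {..<dim_row X}"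
  hence i: "i < dim_row X" by simp
  have "(X * mat_adj X) $$ (i,i) = (\<Sum>l<dim_col X. X $$ (i,l) * qcnj (X $$ (i,l)))"
    using i by (subst mult_entry[of _ "dim_row X" "dim_col X" _ "dim_row X"]) (auto intro!: sum.cong)
  thus "(\<Sum>j<dim_col X. qnorm2 (X $$ (i, j))) = qRe ((X * mat_adj X) $$ (i, i))"
    by (simp add: qRe_sum qnorm2_def power2_eq_square)
qed

lemma fro_split:
  assumes A: "A \<in> carrier_mat N N" and B: "B \<in> carrier_mat N r"
    and AB: "A * mat_adj A + B * mat_adj B = 1\<^sub>m N"
    and X: "X \<in> carrier_mat k N"
  shows "fro (X * A) + fro (X * B) = fro X"
proof -
  have e: "(X * A) * mat_adj (X * A) + (X * B) * mat_adj (X * B) = X * mat_adj X"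
  proof -
    have "(X * A) * mat_adj (X * A) + (X * B) * mat_adj (X * B)
        = X * (A * mat_adj A) * mat_adj X + X * (B * mat_adj B) * mat_adj X"
      using A B X by (simp add: adj_mult[of _ k N] 
         assoc_mult_mat[OF X A mult_carrier_mat[OF adj_carrier[OF A] adj_carrier[OF X]]]
         assoc_mult_mat[OF X B mult_carrier_mat[OF adj_carrier[OF B] adj_carrier[OF X]]]
         assoc_mult_mat[OF X mult_carrier_mat[OF A adj_carrier[OF A]] adj_carrier[OF X]]
         assoc_mult_mat[OF X mult_carrier_mat[OF B adj_carrier[OF B]] adj_carrier[OF X]]
         assoc_mult_mat[OF A adj_carrier[OF A] adj_carrier[OF X]]
         assoc_mult_mat[OF B adj_carrier[OF B] adj_carrier[OF X]])
    also have "\<dots> = X * (A * mat_adj A + B * mat_adj B) * mat_adj X"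
      using A B X
      by (simp add: mult_add_distrib_mat[OF X mult_carrier_mat[OF A adj_carrier[OF A]] mult_carrier_mat[OF B adj_carrier[OF B]]]
        add_mult_distrib_mat[OF mult_carrier_mat[OF X mult_carrier_mat[OF A adj_carrier[OF A]]] mult_carrier_mat[OF X mult_carrier_mat[OF B adj_carrier[OF B]]] adj_carrier[OF X]])
    also have "\<dots> = X * mat_adj X" using AB X by simp
    finally show ?thesis .
  qed
  have "fro (X * A) + fro (X * B) = (\<Sum>i<k. qRe (((X * A) * mat_adj (X * A)) $$ (i,i)) + qRe (((X * B) * mat_adj (X * B)) $$ (i,i)))"
    unfolding fro_adj using A B X by (simp add: sum.distrib)
  also have "\<dots> = (\<Sum>i<k. qRe ((X * mat_adj X) $$ (i,i)))"
  proof (intro sum.cong refl)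
    fix i assume "i \<in> {..<k}"
    hence "((X * A) * mat_adj (X * A) + (X * B) * mat_adj (X * B)) $$ (i,i)
      = ((X * A) * mat_adj (X * A)) $$ (i,i) + ((X * B) * mat_adj (X * B)) $$ (i,i)"
      using A B X by (intro index_add_mat) auto
    thus "qRe (((X * A) * mat_adj (X * A)) $$ (i,i)) + qRe (((X * B) * mat_adj (X * B)) $$ (i,i)) = qRe ((X * mat_adj X) $$ (i,i))"
      unfolding e by simp
  qed
  also have "\<dots> = fro X" unfolding fro_adj using X by simp
  finally show ?thesis .
qed

primrec st :: "quat mat \<Rightarrow> quat mat \<Rightarrow> nat \<Rightarrow> (nat \<Rightarrow> quat vec) \<Rightarrow> nat \<Rightarrow> quat vec" where
  "st A B N u 0 = 0\<^sub>v N"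
| "st A B N u (Suc k) = A *\<^sub>v st A B N u k + B *\<^sub>v u k"

lemma pow_mat_Suc_left: "A \<in> carrier_mat n n \<Longrightarrow> A ^\<^sub>m (Suc k) = A * A ^\<^sub>m k"
proof (induct k)
  case 0 thus ?case by simp
next
  case (Suc k)
  have "A ^\<^sub>m Suc (Suc k) = (A * A ^\<^sub>m k) * A" using Suc by simp
  also have "\<dots> = A * (A ^\<^sub>m k * A)" using Suc by (simp add: assoc_mult_mat[of _ n n _ n _ n])
  finally show ?case by simp
qed

lemma mult_zero_vec_right: "M \<in> carrier_mat m n \<Longrightarrow> M *\<^sub>v 0\<^sub>v n = 0\<^sub>v m"
  by (intro eq_vecI) (auto simp: scalar_prod_def)

lemma vnorm2_nonneg: "vnorm2 v \<ge> 0"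
  unfolding vnorm2_def by (intro sum_nonneg) (simp add: qnorm2_nonneg)

lemma vnorm2_zero[simp]: "vnorm2 (0\<^sub>v n) = 0"
  unfolding vnorm2_def by (simp add: qnorm2_def)

lemma qnorm2_add_le: "qnorm2 (a + b) \<le> 2 * qnorm2 a + 2 * qnorm2 b"
proof -
  have h: "(x + y)\<^sup>2 \<le> 2 * x\<^sup>2 + 2 * y\<^sup>2" for x y :: real
    using zero_le_power2[of "x - y"] by (simp add: power2_eq_square algebra_simps)
  show ?thesis unfolding qnorm2_def using h[of "qRe a" "qRe b"] h[of "qI a" "qI b"] h[of "qJ a" "qJ b"] h[of "qK a" "qK b"]
    by simp
qed

lemma vnorm2_add_le: "dim_vec a = dim_vec b \<Longrightarrow> vnorm2 (a + b) \<le> 2 * vnorm2 a + 2 * vnorm2 b"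
  unfolding vnorm2_def by (simp add: sum_distrib_left sum.distrib[symmetric] qnorm2_add_le sum_mono)

context
  fixes A B C D :: "quat mat" and N r :: nat
  assumes A: "A \<in> carrier_mat N N" and B: "B \<in> carrier_mat N r"
    and C: "C \<in> carrier_mat r N" and D: "D \<in> carrier_mat r r"
begin

lemma st_carrier: "(\<And>k. u k \<in> carrier_vec r) \<Longrightarrow> st A B N u k \<in> carrier_vec N"
  by (induct k) (use A B in auto)

lemma st_closed:
  assumes u: "\<And>k. u k \<in> carrier_vec r"
  shows "M \<in> carrier_mat m N \<Longrightarrow> M *\<^sub>v st A B N u k = vec m (\<lambda>i. \<Sum>j<k. ((M * A ^\<^sub>m (k - 1 - j) * B) *\<^sub>v u j) $ i)"
proof (induct k arbitrary: M m)
  case 0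
  thus ?case by (intro eq_vecI) (auto simp: mult_zero_vec_right)
next
  case (Suc k)
  note M = Suc.prems
  have s: "st A B N u k \<in> carrier_vec N" using st_carrier u .
  have MA: "M * A \<in> carrier_mat m N" using M A by simp
  have "M *\<^sub>v st A B N u (Suc k) = (M * A) *\<^sub>v st A B N u k + (M * B) *\<^sub>v u k"
    using M A B s u by (simp add: mult_add_distrib_mat_vec[OF M mult_mat_vec_carrier[OF A s] mult_mat_vec_carrier[OF B u]])
  also have "\<dots> = vec m (\<lambda>i. \<Sum>j<Suc k. ((M * A ^\<^sub>m (Suc k - 1 - j) * B) *\<^sub>v u j) $ i)"
  proof (intro eq_vecI)
    fix i assume "i < dim_vec (vec m (\<lambda>i. \<Sum>j<Suc k. ((M * A ^\<^sub>m (Suc k - 1 - j) * B) *\<^sub>v u j) $ i))"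
    hence i: "i < m" by simp
    have "((M * A) *\<^sub>v st A B N u k + (M * B) *\<^sub>v u k) $ i
       = (\<Sum>j<k. ((M * A * A ^\<^sub>m (k - 1 - j) * B) *\<^sub>v u j) $ i) + ((M * B) *\<^sub>v u k) $ i"
      using Suc.hyps[OF MA] i M B u by simp
    also have "(\<Sum>j<k. ((M * A * A ^\<^sub>m (k - 1 - j) * B) *\<^sub>v u j) $ i) = (\<Sum>j<k. ((M * A ^\<^sub>m (Suc k - 1 - j) * B) *\<^sub>v u j) $ i)"
    proof (intro sum.cong refl)
      fix j assume "j \<in> {..<k}"
      hence "Suc k - 1 - j = Suc (k - 1 - j)" by auto
      hence "A ^\<^sub>m (Suc k - 1 - j) = A * A ^\<^sub>m (k - 1 - j)" using pow_mat_Suc_left[OF A] by simp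
      hence "M * A ^\<^sub>m (Suc k - 1 - j) = M * A * A ^\<^sub>m (k - 1 - j)" using M A by (simp add: assoc_mult_mat[OF M A pow_carrier_mat[OF A]])
      thus "((M * A * A ^\<^sub>m (k - 1 - j) * B) *\<^sub>v u j) $ i = ((M * A ^\<^sub>m (Suc k - 1 - j) * B) *\<^sub>v u j) $ i" by simp
    qed
    also have "((M * B) *\<^sub>v u k) $ i = ((M * A ^\<^sub>m (Suc k - 1 - k) * B) *\<^sub>v u k) $ i" using M A by simp
    finally show "((M * A) *\<^sub>v st A B N u k + (M * B) *\<^sub>v u k) $ i = vec m (\<lambda>i. \<Sum>j<Suc k. ((M * A ^\<^sub>m (Suc k - 1 - j) * B) *\<^sub>v u j) $ i) $ i"
      using i by simp
  qed (use M B u in simp)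
  finally show ?case .
qed

lemma MB_eq:
  assumes u: "\<And>k. u k \<in> carrier_vec r"
  shows "MB A B C D r u k = C *\<^sub>v st A B N u k + D *\<^sub>v u k"
proof (intro eq_vecI)
  fix i assume "i < dim_vec (C *\<^sub>v st A B N u k + D *\<^sub>v u k)"
  hence i: "i < r" using D by simp
  have "MB A B C D r u k $ i = (\<Sum>j\<le>k. (bcoef A B C D j *\<^sub>v u (k - j)) $ i)"
    unfolding MB_def using i by simp
  also have "\<dots> = (D *\<^sub>v u k) $ i + (\<Sum>j<k. (bcoef A B C D (Suc j) *\<^sub>v u (k - Suc j)) $ i)"
    by (subst sum.atMost_shift) (simp add: bcoef_def)
  also have "(\<Sum>j<k. (bcoef A B C D (Suc j) *\<^sub>v u (k - Suc j)) $ i)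
      = (\<Sum>j<k. ((C * A ^\<^sub>m (k - 1 - (k - Suc j)) * B) *\<^sub>v u (k - Suc j)) $ i)"
  proof (intro sum.cong refl)
    fix j assume "j \<in> {..<k}"
    hence "k - 1 - (k - Suc j) = j" by auto
    thus "(bcoef A B C D (Suc j) *\<^sub>v u (k - Suc j)) $ i = ((C * A ^\<^sub>m (k - 1 - (k - Suc j)) * B) *\<^sub>v u (k - Suc j)) $ i"
      by (simp add: bcoef_def)
  qed
  also have "\<dots> = (\<Sum>j<k. ((C * A ^\<^sub>m (k - 1 - j) * B) *\<^sub>v u j) $ i)"
    by (rule sum.nat_diff_reindex[where g="\<lambda>j. ((C * A ^\<^sub>m (k - 1 - j) * B) *\<^sub>v u j) $ i"])
  also have "\<dots> = (C *\<^sub>v st A B N u k) $ i"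
    using st_closed[OF u C] i by simp
  finally show "MB A B C D r u k $ i = (C *\<^sub>v st A B N u k + D *\<^sub>v u k) $ i"
    using i C D by simp
qed (use C D in \<open>simp add: MB_def\<close>)

end

context
  fixes A B C D :: "quat mat" and N r :: nat
  assumes A: "A \<in> carrier_mat N N" and B: "B \<in> carrier_mat N r"
    and C: "C \<in> carrier_mat r N" and D: "D \<in> carrier_mat r r"
    and U: "qunitary (four_block_mat A B C D)"
begin

lemma energy_sum:
  assumes u: "\<And>k. u k \<in> carrier_vec r"
  shows "(\<Sum>k<K. vnorm2 (MB A B C D r u k)) + vnorm2 (st A B N u K) = (\<Sum>k<K. vnorm2 (u k))"
proof (induct K)
  case 0 thus ?case by simp
next
  case (Suc K)
  have "vnorm2 (st A B N u (Suc K)) + vnorm2 (MB A B C D r u K) = vnorm2 (st A B N u K) + vnorm2 (u K)"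
    unfolding MB_eq[OF A B C D u] st.simps
    by (rule energy[OF A B C D U st_carrier[OF A B C D u] u])
  thus ?case using Suc by simp
qed

lemma st_add:
  assumes u1: "\<And>k. u1 k \<in> carrier_vec r" and u2: "\<And>k. u2 k \<in> carrier_vec r"
  shows "st A B N (\<lambda>k. u1 k + u2 k) K = st A B N u1 K + st A B N u2 K"
proof (induct K)
  case 0 thus ?case by simp
next
  case (Suc K)
  have s1: "st A B N u1 K \<in> carrier_vec N" and s2: "st A B N u2 K \<in> carrier_vec N"
    using st_carrier[OF A B C D u1] st_carrier[OF A B C D u2] .
  show ?case
  proof (intro eq_vecI)
    fix i assume "i < dim_vec (st A B N u1 (Suc K) + st A B N u2 (Suc K))"
    hence i: "i < N" using A B by simp
    show "st A B N (\<lambda>k. u1 k + u2 k) (Suc K) $ i = (st A B N u1 (Suc K) + st A B N u2 (Suc K)) $ i"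
      unfolding st.simps Suc
      using i A B s1 s2 u1[of K] u2[of K]
      by (simp add: mult_add_distrib_mat_vec[OF A s1 s2] mult_add_distrib_mat_vec[OF B u1 u2] algebra_simps)
  qed (use A B in simp)
qed

lemma fro_AB_summable: "summable (\<lambda>m. fro (A ^\<^sub>m m * B))"
proof (rule summableI_nonneg_bounded[where x="fro (1\<^sub>m N)"])
  fix n
  have AB: "A * mat_adj A + B * mat_adj B = 1\<^sub>m N" using unitary_blocks[OF A B C D U] by simp
  have h: "fro (A ^\<^sub>m m * B) = fro (A ^\<^sub>m m) - fro (A ^\<^sub>m (Suc m))" for m
    using fro_split[OF A B AB pow_carrier_mat[OF A, of m]] by simp
  have "(\<Sum>i<n. fro (A ^\<^sub>m i * B)) = (\<Sum>i<n. fro (A ^\<^sub>m i) - fro (A ^\<^sub>m (Suc i)))"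
    by (intro sum.cong refl h)
  also have "\<dots> = fro (A ^\<^sub>m 0) - fro (A ^\<^sub>m n)"
    by (rule sum_lessThan_telescope')
  finally have "(\<Sum>i<n. fro (A ^\<^sub>m i * B)) = fro (A ^\<^sub>m 0) - fro (A ^\<^sub>m n)" .
  also have "\<dots> \<le> fro (1\<^sub>m N)" using A fro_nonneg[of "A ^\<^sub>m n"] by simp
  finally show "(\<Sum>i<n. fro (A ^\<^sub>m i * B)) \<le> fro (1\<^sub>m N)" .
qed (rule fro_nonneg)

lemma AB_entry_zero: 
  assumes i: "i < N" and l: "l < r"
  shows "(\<lambda>m. (A ^\<^sub>m m * B) $$ (i,l)) \<longlonglongrightarrow> 0"
proof -
  have "(\<lambda>m. sqrt (fro (A ^\<^sub>m m * B))) \<longlonglongrightarrow> sqrt 0"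
    by (intro tendsto_real_sqrt summable_LIMSEQ_zero fro_AB_summable)
  hence z: "(\<lambda>m. sqrt (fro (A ^\<^sub>m m * B))) \<longlonglongrightarrow> 0" by simp
  show ?thesis
  proof (rule tendsto_0_le[OF z, where K=1], rule always_eventually, rule allI)
    fix m
    have "qnorm2 ((A ^\<^sub>m m * B) $$ (i,l)) \<le> fro (A ^\<^sub>m m * B)"
      using i l A B by (intro entry_le_fro) auto
    hence "sqrt (qnorm2 ((A ^\<^sub>m m * B) $$ (i,l))) \<le> sqrt (fro (A ^\<^sub>m m * B))"
      by (rule real_sqrt_le_mono)
    thus "norm ((A ^\<^sub>m m * B) $$ (i,l)) \<le> norm (sqrt (fro (A ^\<^sub>m m * B))) * 1"
      by (simp add: qnorm2_norm)
  qed
qed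

lemma AB_vec_zero:
  assumes i: "i < N" and w: "w \<in> carrier_vec r"
  shows "(\<lambda>m. ((A ^\<^sub>m m * B) *\<^sub>v w) $ i) \<longlonglongrightarrow> 0"
proof -
  have e: "((A ^\<^sub>m m * B) *\<^sub>v w) $ i = (\<Sum>l<r. (A ^\<^sub>m m * B) $$ (i,l) * w $ l)" for m
    using i A B w by (simp add: sp_row_vec[OF mult_carrier_mat[OF pow_carrier_mat[OF A] B] w])
  show ?thesis unfolding e
    by (intro tendsto_null_sum tendsto_mult_left_zero AB_entry_zero i) simp
qed

lemma st_trunc_zero:
  assumes u: "\<And>k. u k \<in> carrier_vec r" and z: "\<And>k. k \<ge> J \<Longrightarrow> u k = 0\<^sub>v r"
  shows "(\<lambda>K. vnorm2 (st A B N u K)) \<longlonglongrightarrow> 0"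
proof -
  have ent: "(\<lambda>K. st A B N u K $ i) \<longlonglongrightarrow> 0" if i: "i < N" for i
  proof -
    have ev: "\<forall>\<^sub>F K in sequentially. (\<Sum>j<J. ((A ^\<^sub>m (K - Suc j) * B) *\<^sub>v u j) $ i) = st A B N u K $ i"
    proof (rule eventually_sequentiallyI[where c=J])
      fix K assume K: "J \<le> K"
      have sc: "st A B N u K \<in> carrier_vec N" by (rule st_carrier[OF A B C D u])
      have cl: "1\<^sub>m N *\<^sub>v st A B N u K = vec N (\<lambda>i. \<Sum>j<K. ((1\<^sub>m N * A ^\<^sub>m (K - 1 - j) * B) *\<^sub>v u j) $ i)"
        by (rule st_closed[OF A B C D u one_carrier_mat])
      have "st A B N u K $ i = (1\<^sub>m N *\<^sub>v st A B N u K) $ i" by (simp only: one_mult_mat_vec[OF sc])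
      also have "\<dots> = (\<Sum>j<K. ((1\<^sub>m N * A ^\<^sub>m (K - 1 - j) * B) *\<^sub>v u j) $ i)"
        unfolding cl using i by (rule index_vec)
      also have "\<dots> = (\<Sum>j<K. ((A ^\<^sub>m (K - Suc j) * B) *\<^sub>v u j) $ i)"
      proof (intro sum.cong refl)
        fix j
        have kk: "K - 1 - j = K - Suc j" by simp
        have "1\<^sub>m N * A ^\<^sub>m (K - 1 - j) = A ^\<^sub>m (K - Suc j)"
          unfolding kk using A by simp
        thus "((1\<^sub>m N * A ^\<^sub>m (K - 1 - j) * B) *\<^sub>v u j) $ i = ((A ^\<^sub>m (K - Suc j) * B) *\<^sub>v u j) $ i"
          by (simp only:)
      qed
      also have "\<dots> = (\<Sum>j<J. ((A ^\<^sub>m (K - Suc j) * B) *\<^sub>v u j) $ i)"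
      proof (rule sum.mono_neutral_right)
        show "\<forall>j\<in>{..<K} - {..<J}. ((A ^\<^sub>m (K - Suc j) * B) *\<^sub>v u j) $ i = 0"
        proof
          fix j assume "j \<in> {..<K} - {..<J}"
          hence "u j = 0\<^sub>v r" using z by auto
          moreover have "(A ^\<^sub>m (K - Suc j) * B) *\<^sub>v 0\<^sub>v r = 0\<^sub>v N"
            by (rule mult_zero_vec_right, rule mult_carrier_mat[OF pow_carrier_mat[OF A] B])
          ultimately show "((A ^\<^sub>m (K - Suc j) * B) *\<^sub>v u j) $ i = 0" using i by simp
        qed
      qed (use K in auto)
      finally show "(\<Sum>j<J. ((A ^\<^sub>m (K - Suc j) * B) *\<^sub>v u j) $ i) = st A B N u K $ i" by simp
    qed
    have "(\<lambda>K. \<Sum>j<J. ((A ^\<^sub>m (K - Suc j) * B) *\<^sub>v u j) $ i) \<longlonglongrightarrow> 0"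
    proof (intro tendsto_null_sum)
      fix j
      show "(\<lambda>K. ((A ^\<^sub>m (K - Suc j) * B) *\<^sub>v u j) $ i) \<longlonglongrightarrow> 0"
        using filterlim_compose[OF AB_vec_zero[OF i u[of j]] filterlim_minus_const_nat_at_top[of "Suc j"]]
        by (simp add: o_def)
    qed
    thus ?thesis using ev by (rule Lim_transform_eventually)
  qed
  have e: "vnorm2 (st A B N u K) = (\<Sum>i<N. (norm (st A B N u K $ i))\<^sup>2)" for K
    unfolding vnorm2_def using st_carrier[where u=u and k=K, OF A B C D u] by (simp add: qnorm2_norm)
  show ?thesis unfolding e
    by (rule tendsto_null_sum) (use ent in \<open>auto intro!: tendsto_null_power tendsto_norm_zero\<close>)
qed

lemma st_zero:
  assumes u: "\<And>k. u k \<in> carrier_vec r" and sm: "summable (\<lambda>k. vnorm2 (u k))"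
  shows "(\<lambda>K. vnorm2 (st A B N u K)) \<longlonglongrightarrow> 0"
proof (rule LIMSEQ_I)
  fix e :: real assume e: "0 < e"
  define f where "f k = vnorm2 (u k)" for k
  define S where "S = suminf f"
  have f0: "f k \<ge> 0" for k unfolding f_def by (rule vnorm2_nonneg)
  have "(\<lambda>n. \<Sum>k<n. f k) \<longlonglongrightarrow> S" unfolding S_def f_def using sm by (simp add: summable_LIMSEQ)
  from LIMSEQ_D[OF this, of "e/8"] e obtain J where J: "\<And>n. n \<ge> J \<Longrightarrow> norm ((\<Sum>k<n. f k) - S) < e/8" by auto
  define u1 where "u1 k = (if k < J then u k else 0\<^sub>v r)" for k
  define u2 where "u2 k = (if k < J then 0\<^sub>v r else u k)" for k
  have u1c: "u1 k \<in> carrier_vec r" and u2c: "u2 k \<in> carrier_vec r" for k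
    unfolding u1_def u2_def using u by auto
  have usplit: "(\<lambda>k. u1 k + u2 k) = u"
    unfolding u1_def u2_def using u by (auto intro!: ext)
  have "\<forall>\<^sub>F K in sequentially. vnorm2 (st A B N u1 K) < e/8"
  proof -
    have "(\<lambda>K. vnorm2 (st A B N u1 K)) \<longlonglongrightarrow> 0"
      by (rule st_trunc_zero[where u=u1 and J=J, OF u1c]) (simp add: u1_def)
    thus ?thesis using e by (auto dest!: order_tendstoD(2)[where a="e/8"])
  qed
  moreover have u2b: "vnorm2 (st A B N u2 K) \<le> e/8" for K
  proof -
    have "vnorm2 (st A B N u2 K) \<le> (\<Sum>k<K. vnorm2 (u2 k))"
    proof -
      have "0 \<le> (\<Sum>k<K. vnorm2 (MB A B C D r u2 k))" by (intro sum_nonneg vnorm2_nonneg)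
      thus ?thesis using energy_sum[where u=u2, OF u2c] by (metis add.commute le_add_same_cancel1)
    qed
    also have "\<dots> = (\<Sum>k<K. if k < J then 0 else f k)"
      unfolding u2_def f_def by (intro sum.cong) auto
    also have "\<dots> \<le> (\<Sum>k<max K J. if k < J then 0 else f k)"
      by (intro sum_mono2) (auto simp: f0)
    also have "\<dots> = (\<Sum>k<max K J. f k) - (\<Sum>k<J. f k)"
    proof -
      have "(\<Sum>k<max K J. f k) = (\<Sum>k<max K J. (if k < J then f k else 0) + (if k < J then 0 else f k))"
        by (intro sum.cong) auto
      also have "\<dots> = (\<Sum>k<max K J. if k < J then f k else 0) + (\<Sum>k<max K J. if k < J then 0 else f k)"
        by (rule sum.distrib)
      also have "(\<Sum>k<max K J. if k < J then f k else 0) = (\<Sum>k<J. f k)"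
        by (subst sum.If_cases) (auto intro!: sum.cong)
      finally show ?thesis by simp
    qed
    also have "\<dots> \<le> S - (\<Sum>k<J. f k)"
      unfolding S_def using sm f0 unfolding f_def by (auto intro!: sum_le_suminf)
    also have "\<dots> < e/8"
    proof -
      have "\<bar>(\<Sum>k<J. f k) - S\<bar> < e/8" using J[of J] by simp
      thus ?thesis by linarith
    qed
    finally show ?thesis by simp
  qed
  ultimately have "\<forall>\<^sub>F K in sequentially. vnorm2 (st A B N u K) < e"
  proof (elim eventually_mono)
    fix K assume h: "vnorm2 (st A B N u1 K) < e/8"
    have "st A B N u K = st A B N u1 K + st A B N u2 K"
      using st_add[where ?u1.0=u1 and ?u2.0=u2, OF u1c u2c] unfolding usplit .
    moreover have d1: "st A B N u1 K \<in> carrier_vec N" by (rule st_carrier[OF A B C D u1c])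
    moreover have d2: "st A B N u2 K \<in> carrier_vec N" by (rule st_carrier[OF A B C D u2c])
    ultimately have "vnorm2 (st A B N u K) \<le> 2 * vnorm2 (st A B N u1 K) + 2 * vnorm2 (st A B N u2 K)"
      using vnorm2_add_le[of "st A B N u1 K" "st A B N u2 K"] by simp
    thus "vnorm2 (st A B N u K) < e" using h u2b[of K] e by linarith
  qed
  then obtain no where no: "\<And>n. n \<ge> no \<Longrightarrow> vnorm2 (st A B N u n) < e"
    unfolding eventually_sequentially by blast
  show "\<exists>no. \<forall>n\<ge>no. norm (vnorm2 (st A B N u n) - 0) < e"
  proof (intro exI allI impI)
    fix n assume "n \<ge> no"
    thus "norm (vnorm2 (st A B N u n) - 0) < e" using no[of n] abs_of_nonneg[OF vnorm2_nonneg[of "st A B N u n"]] by simp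
  qed
qed

lemma isometry:
  assumes u: "u \<in> H2 r"
  shows "MB A B C D r u \<in> H2 r \<and> H2norm2 (MB A B C D r u) = H2norm2 u"
proof -
  have uc: "\<And>k. u k \<in> carrier_vec r" and sm: "summable (\<lambda>k. vnorm2 (u k))" using u unfolding H2_def by auto
  have "(\<lambda>K. (\<Sum>k<K. vnorm2 (u k)) - vnorm2 (st A B N u K)) \<longlonglongrightarrow> (\<Sum>k. vnorm2 (u k)) - 0"
    by (intro tendsto_diff summable_LIMSEQ sm st_zero uc)
  moreover have "(\<lambda>K. (\<Sum>k<K. vnorm2 (u k)) - vnorm2 (st A B N u K)) = (\<lambda>n. \<Sum>k<n. vnorm2 (MB A B C D r u k))"
  proof (rule ext)
    fix K show "(\<Sum>k<K. vnorm2 (u k)) - vnorm2 (st A B N u K) = (\<Sum>k<K. vnorm2 (MB A B C D r u k))"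
      using energy_sum[where u=u and K=K, OF uc] by linarith
  qed
  ultimately have "(\<lambda>k. vnorm2 (MB A B C D r u k)) sums (\<Sum>k. vnorm2 (u k))"
    unfolding sums_def by simp
  moreover have "MB A B C D r u k \<in> carrier_vec r" for k unfolding MB_def by simp
  ultimately show ?thesis unfolding H2_def H2norm2_def by (auto simp: sums_iff)
qed

end

lemma alt_sum: "(\<Sum>j\<le>m. (-1::real) ^ j) = (if even m then 1 else 0)"
  by (induct m) auto

lemma S_sum: "(\<Sum>j\<le>m. (-1::real) ^ j * (real m - real j + 1)) = (if even m then (real m + 2) / 2 else (real m + 1) / 2)"
proof (induct m)
  case 0 thus ?case by simp
next
  case (Suc m)
  have "(\<Sum>j\<le>Suc m. (-1::real) ^ j * (real (Suc m) - real j + 1))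
      = (\<Sum>j\<le>m. (-1::real) ^ j * (real (Suc m) - real j + 1)) + (-1) ^ Suc m"
    by simp
  also have "(\<Sum>j\<le>m. (-1::real) ^ j * (real (Suc m) - real j + 1))
      = (\<Sum>j\<le>m. (-1::real) ^ j * (real m - real j + 1)) + (\<Sum>j\<le>m. (-1::real) ^ j)"
    by (simp add: sum.distrib[symmetric] algebra_simps)
  finally show ?case unfolding Suc alt_sum by (cases "even m") (simp_all add: field_simps)
qed

lemma cT_eq: "cT m = 2 / ((real m + 1) * (real m + 2)) * (\<Sum>j\<le>m. (-1::real) ^ j * (real m - real j + 1))"
  unfolding cT_def T_def by (simp add: sum_distrib_left algebra_simps)

lemma cT_lower: "cT m \<ge> 1 / (real m + 2)"
proof -
  have "2 * (\<Sum>j\<le>m. (-1::real) ^ j * (real m - real j + 1)) \<ge> real m + 1"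
    unfolding S_sum by auto
  hence "cT m \<ge> (real m + 1) / ((real m + 1) * (real m + 2))"
    unfolding cT_eq by (simp add: divide_right_mono field_simps)
  thus ?thesis by simp
qed

lemma cT_pos: "cT m > 0"
proof -
  have "0 < 1 / (real m + 2)" by simp
  thus ?thesis using cT_lower[of m] by linarith
qed

lemma inv_cT_le: "1 / cT m \<le> real m + 2"
  using cT_lower[of m] cT_pos[of m] by (simp add: field_simps)

lemma T_bounds: "j \<le> m \<Longrightarrow> 0 \<le> T m j \<and> T m j \<le> 1"
proof -
  assume j: "j \<le> m"
  have a: "0 \<le> real m - real j + 1" using j by simp
  have "T m j \<le> 2 * (real m + 1) / ((real m + 1) * (real m + 2))"
    unfolding T_def by (rule divide_right_mono) auto
  also have "\<dots> = ((real m + 1) * 2) / ((real m + 1) * (real m + 2))" by (simp add: mult.commute)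
  also have "\<dots> = 2 / (real m + 2)" by (rule mult_divide_mult_cancel_left) simp
  also have "\<dots> \<le> 1" by simp
  finally have "T m j \<le> 1" .
  moreover have "0 \<le> T m j" unfolding T_def using a by simp
  ultimately show ?thesis by simp
qed

lemma norm_P_le: "norm (P m x) \<le> (real m + 2) * (real m + 1) * norm x ^ m"
proof -
  have t: "norm (qreal (T m j) * x ^ (m - j) * qcnj x ^ j) \<le> norm x ^ m" if j: "j \<in> {..m}" for j
  proof -
    have "norm (qreal (T m j) * x ^ (m - j) * qcnj x ^ j) = \<bar>T m j\<bar> * (norm x ^ (m - j) * norm x ^ j)"
      by (simp add: norm_quat_mult norm_qpower)
    also have "norm x ^ (m - j) * norm x ^ j = norm x ^ m"
      using j by (simp add: power_add[symmetric])
    finally show ?thesis using T_bounds[of j m] j by (simp add: mult_left_le_one_le)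
  qed
  have "norm (\<Sum>j\<le>m. qreal (T m j) * x ^ (m - j) * qcnj x ^ j) \<le> (\<Sum>j\<le>m. norm x ^ m)"
    by (rule order.trans[OF norm_sum sum_mono[OF t]])
  also have "\<dots> = (real m + 1) * norm x ^ m" by simp
  finally have s: "norm (\<Sum>j\<le>m. qreal (T m j) * x ^ (m - j) * qcnj x ^ j) \<le> (real m + 1) * norm x ^ m" .
  have "norm (P m x) = (1 / cT m) * norm (\<Sum>j\<le>m. qreal (T m j) * x ^ (m - j) * qcnj x ^ j)"
    unfolding P_def using cT_pos[of m] by (simp add: norm_quat_mult)
  also have "\<dots> \<le> (real m + 2) * ((real m + 1) * norm x ^ m)"
    by (rule mult_mono[OF inv_cT_le s]) auto
  finally show ?thesis by (simp add: mult.assoc)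
qed

lemma poly_geom_summable:
  assumes "0 \<le> t" "t < 1"
  shows "summable (\<lambda>m. (real m + 2) * (real m + 1) * t ^ m)"
proof -
  define c :: "nat \<Rightarrow> real" where "c = (\<lambda>_. 1)"
  have g: "summable (\<lambda>n. c n * z ^ n)" if "norm z < 1" for z :: real
    unfolding c_def using summable_geometric[OF that] by simp
  have g2: "summable (\<lambda>n. diffs c n * z ^ n)" if "norm z < 1" for z :: real
    by (rule termdiff_converges[OF that g])
  have "summable (\<lambda>n. diffs (diffs c) n * t ^ n)"
    by (rule termdiff_converges[where K=1, OF _ g2]) (use assms in auto)
  moreover have "diffs (diffs c) n = (real n + 2) * (real n + 1)" for n
    unfolding diffs_def c_def by (simp add: algebra_simps)
  ultimately show ?thesis by simp
qed

lemma Ell_norm: "x \<in> Ell \<Longrightarrow> norm x < 1"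
proof -
  assume "x \<in> Ell"
  hence h: "9 * (qRe x)\<^sup>2 + (qI x)\<^sup>2 + (qJ x)\<^sup>2 + (qK x)\<^sup>2 < 1" unfolding Ell_def by simp
  have "(qRe x)\<^sup>2 + (qI x)\<^sup>2 + (qJ x)\<^sup>2 + (qK x)\<^sup>2 < 1"
    using h zero_le_power2[of "qRe x"] by linarith
  thus "norm x < 1" unfolding norm_quat_def using real_sqrt_less_iff[of _ 1] by simp
qed

lemma P_summable: "x \<in> Ell \<Longrightarrow> summable (\<lambda>m. norm (P m x))"
  by (rule summable_comparison_test[OF _ poly_geom_summable[of "norm x"]])
     (auto simp: norm_P_le Ell_norm)

definition gs :: "quat mat \<Rightarrow> quat mat \<Rightarrow> quat \<Rightarrow> nat \<Rightarrow> nat \<Rightarrow> nat \<Rightarrow> quat" where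
  "gs A C x n i k = (\<Sum>p. P (n + p) x * (C * A ^\<^sub>m p) $$ (i,k))"

lemma adj_adj: "A \<in> carrier_mat n m \<Longrightarrow> mat_adj (mat_adj A) = A"
  by (intro eq_matI) auto

context
  fixes A B C D :: "quat mat" and N r :: nat
  assumes A: "A \<in> carrier_mat N N" and B: "B \<in> carrier_mat N r"
    and C: "C \<in> carrier_mat r N" and D: "D \<in> carrier_mat r r"
    and U: "qunitary (four_block_mat A B C D)"
begin

lemma fro_CA: "fro (C * A ^\<^sub>m p) \<le> fro C"
proof (induct p)
  case 0 thus ?case using C A by simp
next
  case (Suc p)
  have AB: "A * mat_adj A + B * mat_adj B = 1\<^sub>m N" using unitary_blocks[OF A B C D U] by simp
  have X: "C * A ^\<^sub>m p \<in> carrier_mat r N" using C A by simp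
  have "C * A ^\<^sub>m Suc p = (C * A ^\<^sub>m p) * A"
    using C A by (simp add: assoc_mult_mat[OF C pow_carrier_mat[OF A] A])
  hence "fro (C * A ^\<^sub>m Suc p) \<le> fro (C * A ^\<^sub>m p)"
    using fro_split[OF A B AB X] fro_nonneg[of "C * A ^\<^sub>m p * B"] by simp
  thus ?case using Suc by simp
qed

lemma CA_entry_bound:
  assumes i: "i < r" and k: "k < N"
  shows "norm ((C * A ^\<^sub>m p) $$ (i,k)) \<le> sqrt (fro C)"
proof -
  have "qnorm2 ((C * A ^\<^sub>m p) $$ (i,k)) \<le> fro (C * A ^\<^sub>m p)"
    using i k C A by (intro entry_le_fro) auto
  also have "\<dots> \<le> fro C" by (rule fro_CA)
  finally have "sqrt (qnorm2 ((C * A ^\<^sub>m p) $$ (i,k))) \<le> sqrt (fro C)" by simp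
  thus ?thesis by (simp add: qnorm2_norm)
qed

lemma gs_term_bound:
  assumes i: "i < r" and k: "k < N"
  shows "norm (P (n + p) x * (C * A ^\<^sub>m p) $$ (i,k)) \<le> norm (P (p + n) x) * sqrt (fro C)"
  unfolding norm_quat_mult using CA_entry_bound[OF i k, of p]
  by (simp add: add.commute mult_left_mono)

lemma gs_summable:
  assumes x: "x \<in> Ell" and i: "i < r" and k: "k < N"
  shows "summable (\<lambda>p. P (n + p) x * (C * A ^\<^sub>m p) $$ (i,k))"
proof (rule summable_comparison_test)
  show "\<exists>N0. \<forall>p\<ge>N0. norm (P (n + p) x * (C * A ^\<^sub>m p) $$ (i,k)) \<le> norm (P (p + n) x) * sqrt (fro C)"
    using gs_term_bound[OF i k] by blast
  show "summable (\<lambda>p. norm (P (p + n) x) * sqrt (fro C))"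
    by (intro summable_mult2 summable_ignore_initial_segment P_summable x)
qed

lemma gs_zero:
  assumes x: "x \<in> Ell" and i: "i < r" and k: "k < N"
  shows "(\<lambda>n. gs A C x n i k) \<longlonglongrightarrow> 0"
proof -
  define w where "w p = norm (P p x)" for p
  have sw: "summable w" unfolding w_def by (rule P_summable[OF x])
  have "(\<lambda>n. (\<Sum>p. w p) - (\<Sum>p<n. w p)) \<longlonglongrightarrow> (\<Sum>p. w p) - (\<Sum>p. w p)"
    by (intro tendsto_diff tendsto_const summable_LIMSEQ sw)
  hence "(\<lambda>n. (\<Sum>p. w (p + n))) \<longlonglongrightarrow> 0"
    using suminf_minus_initial_segment[OF sw] by simp
  hence z: "(\<lambda>n. (\<Sum>p. w (p + n)) * sqrt (fro C)) \<longlonglongrightarrow> 0"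
    by (rule tendsto_mult_left_zero)
  show ?thesis
  proof (rule tendsto_0_le[OF z, where K=1], rule always_eventually, rule allI)
    fix n
    have sn: "summable (\<lambda>p. w (p + n) * sqrt (fro C))"
      by (intro summable_mult2 summable_ignore_initial_segment sw)
    have "norm (gs A C x n i k) \<le> (\<Sum>p. norm (P (n + p) x * (C * A ^\<^sub>m p) $$ (i,k)))"
      unfolding gs_def
    proof (rule summable_norm)
      show "summable (\<lambda>p. norm (P (n + p) x * (C * A ^\<^sub>m p) $$ (i,k)))"
        by (rule summable_comparison_test[OF _ sn]) (use gs_term_bound[OF i k] in \<open>auto simp: w_def\<close>)
    qed
    also have "\<dots> \<le> (\<Sum>p. w (p + n) * sqrt (fro C))"
    proof (rule suminf_le)
      show "summable (\<lambda>p. norm (P (n + p) x * (C * A ^\<^sub>m p) $$ (i,k)))"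
        by (rule summable_comparison_test[OF _ sn]) (use gs_term_bound[OF i k] in \<open>auto simp: w_def\<close>)
    qed (use gs_term_bound[OF i k] sn in \<open>auto simp: w_def\<close>)
    also have "\<dots> = (\<Sum>p. w (p + n)) * sqrt (fro C)"
      by (rule suminf_mult2[symmetric]) (intro summable_ignore_initial_segment sw)
    also have "\<dots> \<le> norm ((\<Sum>p. w (p + n)) * sqrt (fro C)) * 1" by simp
    finally show "norm (gs A C x n i k) \<le> norm ((\<Sum>p. w (p + n)) * sqrt (fro C)) * 1" .
  qed
qed

lemma gs_rec:
  assumes x: "x \<in> Ell" and i: "i < r" and k: "k < N"
  shows "gs A C x n i k = P n x * C $$ (i,k) + (\<Sum>l<N. gs A C x (Suc n) i l * A $$ (l,k))"
proof -
  let ?f = "\<lambda>p. P (n + p) x * (C * A ^\<^sub>m p) $$ (i,k)"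
  have sf: "summable ?f" by (rule gs_summable[OF x i k])
  have "gs A C x n i k = ?f 0 + (\<Sum>p. ?f (Suc p))"
    unfolding gs_def using suminf_split_head[OF sf] by simp
  also have "?f 0 = P n x * C $$ (i,k)" using C A by simp
  also have "(\<Sum>p. ?f (Suc p)) = (\<Sum>p. \<Sum>l<N. P (Suc n + p) x * (C * A ^\<^sub>m p) $$ (i,l) * A $$ (l,k))"
  proof (rule arg_cong[where f=suminf], rule ext)
    fix p
    have "C * A ^\<^sub>m Suc p = (C * A ^\<^sub>m p) * A"
      using C A by (simp add: assoc_mult_mat[OF C pow_carrier_mat[OF A] A])
    hence "(C * A ^\<^sub>m Suc p) $$ (i,k) = (\<Sum>l<N. (C * A ^\<^sub>m p) $$ (i,l) * A $$ (l,k))"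
      using mult_entry[OF mult_carrier_mat[OF C pow_carrier_mat[OF A]] A i k, of p] by simp
    thus "?f (Suc p) = (\<Sum>l<N. P (Suc n + p) x * (C * A ^\<^sub>m p) $$ (i,l) * A $$ (l,k))"
      by (simp add: sum_distrib_left mult.assoc)
  qed
  also have "\<dots> = (\<Sum>l<N. \<Sum>p. P (Suc n + p) x * (C * A ^\<^sub>m p) $$ (i,l) * A $$ (l,k))"
    by (rule suminf_sum) (intro summable_mult2 gs_summable[OF x i], simp)
  also have "\<dots> = (\<Sum>l<N. gs A C x (Suc n) i l * A $$ (l,k))"
  proof (rule sum.cong[OF refl])
    fix l assume "l \<in> {..<N}"
    hence l: "l < N" by simp
    show "(\<Sum>p. P (Suc n + p) x * (C * A ^\<^sub>m p) $$ (i,l) * A $$ (l,k)) = gs A C x (Suc n) i l * A $$ (l,k)"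
      unfolding gs_def by (rule suminf_mult2[symmetric]) (rule gs_summable[OF x i l])
  qed
  finally show ?thesis .
qed

lemma PnB_entry:
  assumes x: "x \<in> Ell" and i: "i < r" and l: "l < r"
  shows "PnB A B C D r n x $$ (i,l) = P n x * D $$ (i,l) + (\<Sum>k<N. gs A C x (Suc n) i k * B $$ (k,l))"
proof -
  let ?h = "\<lambda>m. P (n + m) x * bcoef A B C D m $$ (i,l)"
  have hs: "?h (Suc m) = (\<Sum>k<N. P (Suc n + m) x * (C * A ^\<^sub>m m) $$ (i,k) * B $$ (k,l))" for m
  proof -
    have "(C * A ^\<^sub>m m * B) $$ (i,l) = (\<Sum>k<N. (C * A ^\<^sub>m m) $$ (i,k) * B $$ (k,l))"
      by (rule mult_entry[OF mult_carrier_mat[OF C pow_carrier_mat[OF A]] B i l])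
    thus ?thesis by (simp add: bcoef_def sum_distrib_left mult.assoc)
  qed
  have ss: "summable (\<lambda>m. ?h (Suc m))" unfolding hs
    by (intro summable_sum summable_mult2 gs_summable[OF x i]) simp
  have sh: "summable ?h" using ss summable_Suc_iff[where f="?h"] by blast
  have "PnB A B C D r n x $$ (i,l) = qsuminf ?h" unfolding PnB_def using i l by simp
  also have "\<dots> = suminf ?h" by (rule qsuminf_eq[OF sh])
  also have "\<dots> = ?h 0 + (\<Sum>m. ?h (Suc m))" using suminf_split_head[OF sh] by simp
  also have "?h 0 = P n x * D $$ (i,l)" by (simp add: bcoef_def)
  also have "(\<Sum>m. ?h (Suc m)) = (\<Sum>m. \<Sum>k<N. P (Suc n + m) x * (C * A ^\<^sub>m m) $$ (i,k) * B $$ (k,l))"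
    unfolding hs ..
  also have "\<dots> = (\<Sum>k<N. \<Sum>m. P (Suc n + m) x * (C * A ^\<^sub>m m) $$ (i,k) * B $$ (k,l))"
    by (rule suminf_sum) (intro summable_mult2 gs_summable[OF x i], simp)
  also have "\<dots> = (\<Sum>k<N. gs A C x (Suc n) i k * B $$ (k,l))"
  proof (rule sum.cong[OF refl])
    fix k assume "k \<in> {..<N}"
    hence k: "k < N" by simp
    show "(\<Sum>m. P (Suc n + m) x * (C * A ^\<^sub>m m) $$ (i,k) * B $$ (k,l)) = gs A C x (Suc n) i k * B $$ (k,l)"
      unfolding gs_def by (rule suminf_mult2[symmetric]) (rule gs_summable[OF x i k])
  qed
  finally show ?thesis .
qed

end

lemma energy2:
  assumes A: "A \<in> carrier_mat N N" and B: "B \<in> carrier_mat N r"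
    and C: "C \<in> carrier_mat r N" and D: "D \<in> carrier_mat r r"
    and ub5: "mat_adj A * A + mat_adj C * C = 1\<^sub>m N"
    and ub6: "mat_adj A * B + mat_adj C * D = 0\<^sub>m N r"
    and ub7: "mat_adj B * A + mat_adj D * C = 0\<^sub>m r N"
    and ub8: "mat_adj B * B + mat_adj D * D = 1\<^sub>m r"
    and x: "x \<in> carrier_vec N" and u: "u \<in> carrier_vec r"
    and x': "x' \<in> carrier_vec N" and u': "u' \<in> carrier_vec r"
  shows "ip (A *\<^sub>v x + B *\<^sub>v u) (A *\<^sub>v x' + B *\<^sub>v u') + ip (C *\<^sub>v x + D *\<^sub>v u) (C *\<^sub>v x' + D *\<^sub>v u')
     = ip x x' + ip u u'"
proof -
  let ?p = "A *\<^sub>v x' + B *\<^sub>v u'" and ?q = "C *\<^sub>v x' + D *\<^sub>v u'"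
  have p: "?p \<in> carrier_vec N" and q: "?q \<in> carrier_vec r" using A B C D x' u' by auto
  note aA = adj_carrier[OF A] and aB = adj_carrier[OF B] and aC = adj_carrier[OF C] and aD = adj_carrier[OF D]
  have "ip (A *\<^sub>v x + B *\<^sub>v u) ?p = ip x (mat_adj A *\<^sub>v ?p) + ip u (mat_adj B *\<^sub>v ?p)"
    using A B x u p by (simp add: ip_add_left ip_mult[of _ N])
  also have "\<dots> = ip x ((mat_adj A * A) *\<^sub>v x') + ip x ((mat_adj A * B) *\<^sub>v u')
      + ip u ((mat_adj B * A) *\<^sub>v x') + ip u ((mat_adj B * B) *\<^sub>v u')"
    using A B x u x' u' aA aB
    by (simp add: mult_add_distrib_mat_vec[of _ N N] mult_add_distrib_mat_vec[of _ r N] ip_add_right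
      assoc_mult_mat_vec[OF aA A x'] assoc_mult_mat_vec[OF aA B u'] assoc_mult_mat_vec[OF aB A x'] assoc_mult_mat_vec[OF aB B u'])
  finally have 1: "ip (A *\<^sub>v x + B *\<^sub>v u) ?p = ip x ((mat_adj A * A) *\<^sub>v x') + ip x ((mat_adj A * B) *\<^sub>v u')
      + ip u ((mat_adj B * A) *\<^sub>v x') + ip u ((mat_adj B * B) *\<^sub>v u')" .
  have "ip (C *\<^sub>v x + D *\<^sub>v u) ?q = ip x (mat_adj C *\<^sub>v ?q) + ip u (mat_adj D *\<^sub>v ?q)"
    using C D x u q by (simp add: ip_add_left ip_mult[of _ r])
  also have "\<dots> = ip x ((mat_adj C * C) *\<^sub>v x') + ip x ((mat_adj C * D) *\<^sub>v u')
      + ip u ((mat_adj D * C) *\<^sub>v x') + ip u ((mat_adj D * D) *\<^sub>v u')"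
    using C D x u x' u' aC aD
    by (simp add: mult_add_distrib_mat_vec[of _ N r] mult_add_distrib_mat_vec[of _ r r] ip_add_right
      assoc_mult_mat_vec[OF aC C x'] assoc_mult_mat_vec[OF aC D u'] assoc_mult_mat_vec[OF aD C x'] assoc_mult_mat_vec[OF aD D u'])
  finally have 2: "ip (C *\<^sub>v x + D *\<^sub>v u) ?q = ip x ((mat_adj C * C) *\<^sub>v x') + ip x ((mat_adj C * D) *\<^sub>v u')
      + ip u ((mat_adj D * C) *\<^sub>v x') + ip u ((mat_adj D * D) *\<^sub>v u')" .
  have 3: "ip x ((mat_adj A * A) *\<^sub>v x') + ip x ((mat_adj C * C) *\<^sub>v x') = ip x x'"
    unfolding ip_sum2[OF mult_carrier_mat[OF aA A] mult_carrier_mat[OF aC C] x' x] ub5 using x' by simp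
  have 4: "ip x ((mat_adj A * B) *\<^sub>v u') + ip x ((mat_adj C * D) *\<^sub>v u') = 0"
    unfolding ip_sum2[OF mult_carrier_mat[OF aA B] mult_carrier_mat[OF aC D] u' x] ub6 using x u' by (simp add: ip_zero)
  have 5: "ip u ((mat_adj B * A) *\<^sub>v x') + ip u ((mat_adj D * C) *\<^sub>v x') = 0"
    unfolding ip_sum2[OF mult_carrier_mat[OF aB A] mult_carrier_mat[OF aD C] x' u] ub7 using x' u by (simp add: ip_zero)
  have 6: "ip u ((mat_adj B * B) *\<^sub>v u') + ip u ((mat_adj D * D) *\<^sub>v u') = ip u u'"
    unfolding ip_sum2[OF mult_carrier_mat[OF aB B] mult_carrier_mat[OF aD D] u' u] ub8 using u' by simp
  show ?thesis
    unfolding 1 2 using 3 4 5 6 by (simp add: algebra_simps)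
qed

definition gv :: "quat mat \<Rightarrow> quat mat \<Rightarrow> nat \<Rightarrow> quat \<Rightarrow> nat \<Rightarrow> nat \<Rightarrow> quat vec" where
  "gv A C N x n i = vec N (\<lambda>k. qcnj (gs A C x n i k))"

definition sg :: "nat \<Rightarrow> quat \<Rightarrow> nat \<Rightarrow> nat \<Rightarrow> quat vec" where
  "sg r x n i = vec r (\<lambda>l. if l = i then qcnj (P n x) else 0)"

definition pv :: "quat mat \<Rightarrow> quat mat \<Rightarrow> quat mat \<Rightarrow> quat mat \<Rightarrow> nat \<Rightarrow> quat \<Rightarrow> nat \<Rightarrow> nat \<Rightarrow> quat vec" where
  "pv A B C D r x n i = vec r (\<lambda>l. qcnj (PnB A B C D r n x $$ (i,l)))"

lemma sum_delta_mult: "i < (r::nat) \<Longrightarrow> (\<Sum>l<r. a l * (if l = i then q else 0)) = a i * (q::quat)"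
proof -
  assume i: "i < r"
  have "(\<Sum>l<r. a l * (if l = i then q else 0)) = (\<Sum>l<r. if l = i then a l * q else 0)"
    by (intro sum.cong) auto
  also have "\<dots> = (\<Sum>l\<in>{i}. if l = i then a l * q else 0)"
    by (rule sum.mono_neutral_right) (use i in auto)
  finally show ?thesis by simp
qed

context
  fixes A B C D :: "quat mat" and N r :: nat
  assumes A: "A \<in> carrier_mat N N" and B: "B \<in> carrier_mat N r"
    and C: "C \<in> carrier_mat r N" and D: "D \<in> carrier_mat r r"
    and U: "qunitary (four_block_mat A B C D)"
begin

lemma gv_rec:
  assumes x: "x \<in> Ell" and i: "i < r"
  shows "gv A C N x n i = mat_adj A *\<^sub>v gv A C N x (Suc n) i + mat_adj C *\<^sub>v sg r x n i"
proof (rule eq_vecI)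
  fix k assume "k < dim_vec (mat_adj A *\<^sub>v gv A C N x (Suc n) i + mat_adj C *\<^sub>v sg r x n i)"
  hence k: "k < N" using A C by simp
  have gvc: "gv A C N x (Suc n) i \<in> carrier_vec N" unfolding gv_def by simp
  have sgc: "sg r x n i \<in> carrier_vec r" unfolding sg_def by simp
  have "(mat_adj A *\<^sub>v gv A C N x (Suc n) i + mat_adj C *\<^sub>v sg r x n i) $ k
     = (\<Sum>l<N. qcnj (A $$ (l,k)) * qcnj (gs A C x (Suc n) i l)) + qcnj (C $$ (i,k)) * qcnj (P n x)"
  proof -
    have e1: "(mat_adj A *\<^sub>v gv A C N x (Suc n) i + mat_adj C *\<^sub>v sg r x n i) $ k
        = (mat_adj A *\<^sub>v gv A C N x (Suc n) i) $ k + (mat_adj C *\<^sub>v sg r x n i) $ k"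
      by (rule index_add_vec) (use k C in simp)
    have e2: "(mat_adj A *\<^sub>v gv A C N x (Suc n) i) $ k = (\<Sum>l<N. mat_adj A $$ (k,l) * gv A C N x (Suc n) i $ l)"
      by (rule mult_vec_entry[OF adj_carrier[OF A] gvc k])
    have e3: "(mat_adj C *\<^sub>v sg r x n i) $ k = (\<Sum>l<r. mat_adj C $$ (k,l) * sg r x n i $ l)"
      by (rule mult_vec_entry[OF adj_carrier[OF C] sgc k])
    show ?thesis unfolding e1 e2 e3 using k A C i by (simp add: gv_def sg_def sum_delta_mult)
  qed
  also have "\<dots> = qcnj (gs A C x n i k)"
    unfolding gs_rec[OF A B C D U x i k] by (simp add: qcnj_sum)
  finally show "gv A C N x n i $ k = (mat_adj A *\<^sub>v gv A C N x (Suc n) i + mat_adj C *\<^sub>v sg r x n i) $ k"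
    using k unfolding gv_def by simp
qed (use A C in \<open>simp add: gv_def\<close>)

lemma pv_rec:
  assumes x: "x \<in> Ell" and i: "i < r"
  shows "pv A B C D r x n i = mat_adj B *\<^sub>v gv A C N x (Suc n) i + mat_adj D *\<^sub>v sg r x n i"
proof (rule eq_vecI)
  fix l assume "l < dim_vec (mat_adj B *\<^sub>v gv A C N x (Suc n) i + mat_adj D *\<^sub>v sg r x n i)"
  hence l: "l < r" using B D by simp
  have gvc: "gv A C N x (Suc n) i \<in> carrier_vec N" unfolding gv_def by simp
  have sgc: "sg r x n i \<in> carrier_vec r" unfolding sg_def by simp
  have "(mat_adj B *\<^sub>v gv A C N x (Suc n) i + mat_adj D *\<^sub>v sg r x n i) $ l
     = (\<Sum>k<N. qcnj (B $$ (k,l)) * qcnj (gs A C x (Suc n) i k)) + qcnj (D $$ (i,l)) * qcnj (P n x)"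
  proof -
    have e1: "(mat_adj B *\<^sub>v gv A C N x (Suc n) i + mat_adj D *\<^sub>v sg r x n i) $ l
        = (mat_adj B *\<^sub>v gv A C N x (Suc n) i) $ l + (mat_adj D *\<^sub>v sg r x n i) $ l"
      by (rule index_add_vec) (use l D in simp)
    have e2: "(mat_adj B *\<^sub>v gv A C N x (Suc n) i) $ l = (\<Sum>k<N. mat_adj B $$ (l,k) * gv A C N x (Suc n) i $ k)"
      by (rule mult_vec_entry[OF adj_carrier[OF B] gvc l])
    have e3: "(mat_adj D *\<^sub>v sg r x n i) $ l = (\<Sum>m<r. mat_adj D $$ (l,m) * sg r x n i $ m)"
      by (rule mult_vec_entry[OF adj_carrier[OF D] sgc l])
    show ?thesis unfolding e1 e2 e3 using l B D i by (simp add: gv_def sg_def sum_delta_mult)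
  qed
  also have "\<dots> = qcnj (PnB A B C D r n x $$ (i,l))"
    unfolding PnB_entry[OF A B C D U x i l] by (simp add: qcnj_sum)
  finally show "pv A B C D r x n i $ l = (mat_adj B *\<^sub>v gv A C N x (Suc n) i + mat_adj D *\<^sub>v sg r x n i) $ l"
    using l unfolding pv_def by simp
qed (use B D in \<open>simp add: pv_def\<close>)

end

context
  fixes A B C D :: "quat mat" and N r :: nat
  assumes A: "A \<in> carrier_mat N N" and B: "B \<in> carrier_mat N r"
    and C: "C \<in> carrier_mat r N" and D: "D \<in> carrier_mat r r"
    and U: "qunitary (four_block_mat A B C D)"
begin

lemma step_identity:
  assumes x: "x \<in> Ell" and y: "y \<in> Ell" and i: "i < r" and j: "j < r"
  shows "ip (gv A C N x n i) (gv A C N y n j) + ip (pv A B C D r x n i) (pv A B C D r y n j)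
    = ip (gv A C N x (Suc n) i) (gv A C N y (Suc n) j) + ip (sg r x n i) (sg r y n j)"
proof -
  note ub = unitary_blocks[OF A B C D U]
  have c: "mat_adj A \<in> carrier_mat N N" "mat_adj C \<in> carrier_mat N r" "mat_adj B \<in> carrier_mat r N" "mat_adj D \<in> carrier_mat r r"
    using A B C D by auto
  show ?thesis
    unfolding gv_rec[OF A B C D U x i, where n=n] gv_rec[OF A B C D U y j, where n=n]
      pv_rec[OF A B C D U x i, where n=n] pv_rec[OF A B C D U y j, where n=n]
  proof (rule energy2[OF c])
    show "mat_adj (mat_adj A) * mat_adj A + mat_adj (mat_adj B) * mat_adj B = 1\<^sub>m N"
      using ub(1) A B by (simp add: adj_adj)
    show "mat_adj (mat_adj A) * mat_adj C + mat_adj (mat_adj B) * mat_adj D = 0\<^sub>m N r"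
      using ub(2) A B by (simp add: adj_adj)
    show "mat_adj (mat_adj C) * mat_adj A + mat_adj (mat_adj D) * mat_adj B = 0\<^sub>m r N"
      using ub(3) C D by (simp add: adj_adj)
    show "mat_adj (mat_adj C) * mat_adj C + mat_adj (mat_adj D) * mat_adj D = 1\<^sub>m r"
      using ub(4) C D by (simp add: adj_adj)
  qed (auto simp: gv_def sg_def)
qed

lemma summand_eq:
  assumes x: "x \<in> Ell" and y: "y \<in> Ell" and i: "i < r" and j: "j < r"
  shows "(if i = j then P n x * qcnj (P n y) else 0)
      - (\<Sum>l<r. PnB A B C D r n x $$ (i,l) * qcnj (PnB A B C D r n y $$ (j,l)))
    = ip (gv A C N x n i) (gv A C N y n j) - ip (gv A C N x (Suc n) i) (gv A C N y (Suc n) j)"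
proof -
  have s: "ip (sg r x n i) (sg r y n j) = (if i = j then P n x * qcnj (P n y) else 0)"
  proof -
    have "ip (sg r x n i) (sg r y n j) = (\<Sum>l<r. (if l = i then (if i = j then P n x * qcnj (P n y) else 0) else 0))"
      unfolding ip_def sg_def by (intro sum.cong) auto
    also have "\<dots> = (\<Sum>l\<in>{i}. (if l = i then (if i = j then P n x * qcnj (P n y) else 0) else 0))"
      by (rule sum.mono_neutral_right) (use i in auto)
    finally show ?thesis by simp
  qed
  have p: "ip (pv A B C D r x n i) (pv A B C D r y n j) = (\<Sum>l<r. PnB A B C D r n x $$ (i,l) * qcnj (PnB A B C D r n y $$ (j,l)))"
    unfolding ip_def pv_def by (intro sum.cong) auto
  show ?thesis
    using step_identity[OF x y i j, of n] unfolding s[symmetric] p[symmetric]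
    by (simp add: algebra_simps)
qed

lemma T_zero:
  assumes x: "x \<in> Ell" and y: "y \<in> Ell" and i: "i < r" and j: "j < r"
  shows "(\<lambda>n. ip (gv A C N x n i) (gv A C N y n j)) \<longlonglongrightarrow> 0"
proof -
  have e: "ip (gv A C N x n i) (gv A C N y n j) = (\<Sum>k<N. gs A C x n i k * qcnj (gs A C y n j k))" for n
    unfolding ip_def gv_def by (intro sum.cong) auto
  show ?thesis unfolding e
  proof (intro tendsto_null_sum)
    fix k assume "k \<in> {..<N}"
    hence k: "k < N" by simp
    have "(\<lambda>n. qcnj (gs A C y n j k)) \<longlonglongrightarrow> qcnj 0"
      by (rule bounded_linear.tendsto[OF bl_qcnj gs_zero[OF A B C D U y j k]])
    hence "(\<lambda>n. qcnj (gs A C y n j k)) \<longlonglongrightarrow> 0" by simp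
    thus "(\<lambda>n. gs A C x n i k * qcnj (gs A C y n j k)) \<longlonglongrightarrow> 0"
      by (rule tendsto_mult_zero[OF gs_zero[OF A B C D U x i k]])
  qed
qed

lemma KB_entry:
  assumes x: "x \<in> Ell" and y: "y \<in> Ell" and i: "i < r" and j: "j < r"
  shows "KB A B C D r x y $$ (i,j) = (\<Sum>k<N. gs A C x 0 i k * qcnj (gs A C y 0 j k))"
proof -
  let ?T = "\<lambda>n. ip (gv A C N x n i) (gv A C N y n j)"
  have sm: "(\<lambda>n. ?T n - ?T (Suc n)) sums (?T 0 - 0)"
    by (rule telescope_sums'[OF T_zero[OF x y i j]])
  have "KB A B C D r x y $$ (i,j) = qsuminf (\<lambda>n. ?T n - ?T (Suc n))"
    unfolding KB_def using i j summand_eq[OF x y i j] by simp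
  also have "\<dots> = ?T 0" using sm by (simp add: qsuminf_eq sums_iff)
  also have "\<dots> = (\<Sum>k<N. gs A C x 0 i k * qcnj (gs A C y 0 j k))"
    unfolding ip_def gv_def by (intro sum.cong) auto
  finally show ?thesis .
qed

lemma rkhs: "rkhs_finite_dim (KB A B C D r) Ell r"
proof -
  define fk where "fk k = (\<lambda>x. vec r (\<lambda>i. gs A C x 0 i k))" for k
  have "finite (fk ` {..<N}) \<and> (\<forall>y\<in>Ell. \<forall>c\<in>carrier_vec r. \<exists>coef. \<forall>x\<in>Ell.
      KB A B C D r x y *\<^sub>v c = vec r (\<lambda>i. \<Sum>f\<in>fk ` {..<N}. f x $ i * coef f))"
  proof (intro conjI ballI)
  show "finite (fk ` {..<N})" by simp
  fix y :: quat and c :: "quat vec" assume y: "y \<in> Ell" and c: "c \<in> carrier_vec r"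
  define v where "v k = (\<Sum>j<r. qcnj (gs A C y 0 j k) * c $ j)" for k
  define coef where "coef f = (\<Sum>k\<in>{k \<in> {..<N}. fk k = f}. v k)" for f
  show "\<exists>coef. \<forall>x\<in>Ell. KB A B C D r x y *\<^sub>v c = vec r (\<lambda>i. \<Sum>f\<in>fk ` {..<N}. f x $ i * coef f)"
  proof (intro exI ballI)
    fix x assume x: "x \<in> Ell"
    have KBc: "KB A B C D r x y \<in> carrier_mat r r" unfolding KB_def by simp
    show "KB A B C D r x y *\<^sub>v c = vec r (\<lambda>i. \<Sum>f\<in>fk ` {..<N}. f x $ i * coef f)"
    proof (rule eq_vecI)
      fix i assume "i < dim_vec (vec r (\<lambda>i. \<Sum>f\<in>fk ` {..<N}. f x $ i * coef f))"
      hence i: "i < r" by simp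
      have "(KB A B C D r x y *\<^sub>v c) $ i = (\<Sum>j<r. KB A B C D r x y $$ (i,j) * c $ j)"
        by (rule mult_vec_entry[OF KBc c i])
      also have "\<dots> = (\<Sum>j<r. (\<Sum>k<N. gs A C x 0 i k * qcnj (gs A C y 0 j k)) * c $ j)"
        by (intro sum.cong refl) (simp add: KB_entry[OF x y i])
      also have "\<dots> = (\<Sum>k<N. gs A C x 0 i k * v k)"
        unfolding v_def by (simp add: sum_distrib_right sum_distrib_left mult.assoc sum.swap[of _ "{..<r}"])
      also have "\<dots> = (\<Sum>f\<in>fk ` {..<N}. \<Sum>k\<in>{k \<in> {..<N}. fk k = f}. gs A C x 0 i k * v k)"
        by (rule sum.image_gen) simp
      also have "\<dots> = (\<Sum>f\<in>fk ` {..<N}. f x $ i * coef f)"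
      proof (rule sum.cong[OF refl])
        fix f assume "f \<in> fk ` {..<N}"
        have "(\<Sum>k\<in>{k \<in> {..<N}. fk k = f}. gs A C x 0 i k * v k) = (\<Sum>k\<in>{k \<in> {..<N}. fk k = f}. f x $ i * v k)"
        proof (rule sum.cong[OF refl])
          fix k assume "k \<in> {k \<in> {..<N}. fk k = f}"
          hence "f = fk k" by simp
          thus "gs A C x 0 i k * v k = f x $ i * v k" using i unfolding fk_def by simp
        qed
        thus "(\<Sum>k\<in>{k \<in> {..<N}. fk k = f}. gs A C x 0 i k * v k) = f x $ i * coef f"
          unfolding coef_def by (simp add: sum_distrib_left)
      qed
      finally show "(KB A B C D r x y *\<^sub>v c) $ i = vec r (\<lambda>i. \<Sum>f\<in>fk ` {..<N}. f x $ i * coef f) $ i"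
        using i by simp
    qed (use KBc in simp)
  qed
  qed
  thus ?thesis unfolding rkhs_finite_dim_def by blast
qed

end

theorem mainTheorem18:
  fixes N r :: nat and A B C D :: "quat mat"
  assumes "A \<in> carrier_mat N N" and "B \<in> carrier_mat N r"
    and "C \<in> carrier_mat r N" and "D \<in> carrier_mat r r"
    and "qunitary (four_block_mat A B C D)"
  shows "(\<forall>u\<in>H2 r. MB A B C D r u \<in> H2 r \<and> H2norm2 (MB A B C D r u) = H2norm2 u)
         \<and> rkhs_finite_dim (KB A B C D r) Ell r"
  using isometry[OF assms] rkhs[OF assms] by blast

end
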